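(* Let $1\le\alpha\le d$, $k\ge1$, $S_\alpha=(\mathrm{Id}_n+W_\alpha V_\alpha)\cdots(\mathrm{Id}_n+W_1V_1)Z$. With the convention $\dot F=\{H,F\}$, the flow of $H=\frac1k\operatorname{tr}S_\alpha^k$ on $\mathcal C^\times_{n,d,q}$ starting at (the class of) $(X,Z,V_\beta,W_\beta)$ is given by $X(t)=Xe^{-tS_\alpha^k}$, $Z(t)=e^{tS_\alpha^k}Ze^{-tS_\alpha^k}$, $V_\beta(t)=V_\beta e^{-tS_\alpha^k}$ and $W_\beta(t)=e^{tS_\alpha^k}W_\beta$ for $\beta\le\alpha$, $V_\beta(t)=V_\beta$ and $W_\beta(t)=W_\beta$ for $\beta>\alpha$, where $S_\alpha$ is evaluated at the initial point. The flow is complete on $\mathcal C^\times_{n,d,q}$.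
   Context: Fix integers $n\ge1$, $d\ge1$ and $q\in\mathbb C^\times$ not a root of unity. Greek indices range over $\{1,\dots,d\}$; set $o(\alpha,\beta)=0$ if $\alpha=\beta$, $o(\alpha,\beta)=1$ if $\alpha<\beta$, $o(\alpha,\beta)=-1$ if $\alpha>\beta$. Let $\mathcal M^\times_{n,d,q}$ be the affine variety of tuples $(X,Z,V_1,\dots,V_d,W_1,\dots,W_d)$ with $X,Z\in\mathrm{GL}_n(\mathbb C)$, $V_\alpha\in\mathrm{Mat}_{1\times n}(\mathbb C)$, $W_\alpha\in\mathrm{Mat}_{n\times 1}(\mathbb C)$, such that every $\mathrm{Id}_n+W_\alpha V_\alpha$ is invertible and $XZX^{-1}Z^{-1}(\mathrm{Id}_n+W_1V_1)^{-1}\cdots(\mathrm{Id}_n+W_dV_d)^{-1}=q\,\mathrm{Id}_n$. $\mathrm{GL}_n$ acts by $g\cdot(X,Z,V_\alpha,W_\alpha)=(gXg^{-1},gZg^{-1},V_\alpha g^{-1},gW_\alpha)$; the action is free and $\mathcal C^\times_{n,d,q}=\mathcal M^\times_{n,d,q}/\!/\mathrm{GL}_n$ is a smooth affine variety of dimension $2nd$ with $\mathbb C[\mathcal C^\times_{n,d,q}]=\mathbb C[\mathcal M^\times_{n,d,q}]^{\mathrm{GL}_n}$. Write $V_{\alpha,j}$, $W_{\alpha,k}$ for the entries. Let $\{-,-\}$ be the antisymmetric biderivation on functions of $(X,Z,V_\alpha,W_\alpha)$ (Van den Bergh's quasi-Poisson bracket) given by $\{X_{ij},X_{kl}\}=\tfrac12(\delta_{il}(X^2)_{kj}-\delta_{kj}(X^2)_{il})$,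 $\{Z_{ij},Z_{kl}\}=\tfrac12(\delta_{kj}(Z^2)_{il}-\delta_{il}(Z^2)_{kj})$, $\{X_{ij},Z_{kl}\}=\tfrac12((ZX)_{kj}\delta_{il}+\delta_{kj}(XZ)_{il}+Z_{kj}X_{il}-X_{kj}Z_{il})$, $\{U_{ij},W_{\alpha,k}\}=\tfrac12(\delta_{kj}(UW_\alpha)_i-U_{kj}W_{\alpha,i})$, $\{U_{ij},V_{\alpha,l}\}=\tfrac12((V_\alpha U)_j\delta_{il}-V_{\alpha,j}U_{il})$ for $U\in\{X,Z\}$, $\{V_{\alpha,j},V_{\beta,l}\}=\tfrac12 o(\beta,\alpha)(V_{\beta,j}V_{\alpha,l}+V_{\alpha,j}V_{\beta,l})$, $\{W_{\alpha,i},W_{\beta,k}\}=\tfrac12 o(\beta,\alpha)(W_{\beta,k}W_{\alpha,i}+W_{\alpha,k}W_{\beta,i})$, $\{V_{\alpha,j},W_{\beta,k}\}=\delta_{\alpha\beta}(\delta_{kj}+\tfrac12W_{\alpha,k}V_{\alpha,j}+\tfrac12\delta_{kj}V_\alpha W_\alpha)+\tfrac12 o(\alpha,\beta)(\delta_{kj}V_\alpha W_\beta+W_{\beta,k}V_{\alpha,j})$. Restricted to $\mathrm{GL}_n$-invariant functions this bracket induces a non-degenerate Poisson bracket on $\mathcal C^\times_{n,d,q}$ (quasi-Hamiltonian reduction); this is the Poisson bracket $\{-,-\}$ on $\mathcal C^\times_{n,d,q}$. Flows of invariant $H$ are computed on representatives by $\dot M_{ij}=\{H,M_{ij}\}$.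 *)

theory Defs
  imports "HOL-Analysis.Analysis"
begin

text \<open>Coordinates on the space of tuples (X, Z, V_1..V_d, W_1..W_d).
  The matrix size n is the cardinality of the finite index type 'n;
  the Greek indices are natural numbers in {1..d}.\<close>

datatype 'n coord = XC 'n 'n | ZC 'n 'n | VC nat 'n | WC nat 'n

type_synonym 'n pt = "'n coord \<Rightarrow> complex"

definition coords :: "nat \<Rightarrow> 'n coord set" where
  "coords d = {XC i j | i j. True} \<union> {ZC i j | i j. True}
     \<union> {VC a j | a j. a \<in> {1..d}} \<union> {WC a j | a j. a \<in> {1..d}}"

definition Xm :: "'n::finite pt \<Rightarrow> complex^'n^'n" where "Xm p = (\<chi> i j. p (XC i j))"
definition Zm :: "'n::finite pt \<Rightarrow> complex^'n^'n" where "Zm p = (\<chi> i j. p (ZC i j))"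
text \<open>row vector V_a and column vector W_a\<close>
definition Vv :: "'n::finite pt \<Rightarrow> nat \<Rightarrow> complex^'n" where "Vv p a = (\<chi> j. p (VC a j))"
definition Wv :: "'n::finite pt \<Rightarrow> nat \<Rightarrow> complex^'n" where "Wv p a = (\<chi> j. p (WC a j))"

definition Pm :: "'n::finite pt \<Rightarrow> nat \<Rightarrow> complex^'n^'n" where
  "Pm p a = mat 1 + (\<chi> i j. Wv p a $ i * Vv p a $ j)"

fun invprod :: "'n::finite pt \<Rightarrow> nat \<Rightarrow> complex^'n^'n" where
  "invprod p 0 = mat 1"
| "invprod p (Suc a) = invprod p a ** matrix_inv (Pm p (Suc a))"

definition Mx :: "nat \<Rightarrow> complex \<Rightarrow> 'n::finite pt set" where
  "Mx d q = {p. invertible (Xm p) \<and> invertible (Zm p) \<and> (\<forall>a\<in>{1..d}. invertible (Pm p a)) \<and>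
      Xm p ** Zm p ** matrix_inv (Xm p) ** matrix_inv (Zm p) ** invprod p d = mat q}"

fun Sm :: "'n::finite pt \<Rightarrow> nat \<Rightarrow> complex^'n^'n" where
  "Sm p 0 = Zm p"
| "Sm p (Suc a) = Pm p (Suc a) ** Sm p a"

fun mpow :: "complex^'n::finite^'n \<Rightarrow> nat \<Rightarrow> complex^'n^'n" where
  "mpow A 0 = mat 1"
| "mpow A (Suc m) = A ** mpow A m"

definition mexp :: "complex^'n::finite^'n \<Rightarrow> complex^'n^'n" where
  "mexp A = (\<Sum>m. inverse (fact m) *\<^sub>R mpow A m)"

definition msc :: "complex \<Rightarrow> complex^'n::finite^'n \<Rightarrow> complex^'n^'n" where
  "msc t A = (\<chi> i j. t * A $ i $ j)"

definition Ham :: "nat \<Rightarrow> nat \<Rightarrow> 'n::finite pt \<Rightarrow> complex" where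
  "Ham a k p = trace (mpow (Sm p a) k) / of_nat k"

definition osgn :: "nat \<Rightarrow> nat \<Rightarrow> complex" where
  "osgn a b = (if a = b then 0 else if a < b then 1 else -1)"

definition dlt :: "'a \<Rightarrow> 'a \<Rightarrow> complex" where
  "dlt x y = (if x = y then 1 else 0)"

text \<open>Brackets {U_ij, -} for U in {X, Z} against W and V\<close>
definition brUW :: "complex^'n::finite^'n \<Rightarrow> 'n \<Rightarrow> 'n \<Rightarrow> complex^'n \<Rightarrow> 'n \<Rightarrow> complex" where
  "brUW U i j W k = (dlt k j * (U *v W) $ i - U $ k $ j * W $ i) / 2"
definition brUV :: "complex^'n::finite^'n \<Rightarrow> 'n \<Rightarrow> 'n \<Rightarrow> complex^'n \<Rightarrow> 'n \<Rightarrow> complex" where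
  "brUV U i j V l = ((V v* U) $ j * dlt i l - V $ j * U $ i $ l) / 2"

definition sp :: "complex^'n::finite \<Rightarrow> complex^'n \<Rightarrow> complex" where
  "sp V W = (\<Sum>j\<in>UNIV. V $ j * W $ j)"

text \<open>Van den Bergh's quasi-Poisson bracket on coordinate functions, evaluated at a point p.\<close>
fun qbr :: "'n::finite coord \<Rightarrow> 'n coord \<Rightarrow> 'n pt \<Rightarrow> complex" where
  "qbr (XC i j) (XC k l) p = (let X = Xm p in
      (dlt i l * (X ** X) $ k $ j - dlt k j * (X ** X) $ i $ l) / 2)"
| "qbr (ZC i j) (ZC k l) p = (let Z = Zm p in
      (dlt k j * (Z ** Z) $ i $ l - dlt i l * (Z ** Z) $ k $ j) / 2)"
| "qbr (XC i j) (ZC k l) p = (let X = Xm p; Z = Zm p in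
      ((Z ** X) $ k $ j * dlt i l + dlt k j * (X ** Z) $ i $ l + Z $ k $ j * X $ i $ l
        - X $ k $ j * Z $ i $ l) / 2)"
| "qbr (ZC k l) (XC i j) p = - (let X = Xm p; Z = Zm p in
      ((Z ** X) $ k $ j * dlt i l + dlt k j * (X ** Z) $ i $ l + Z $ k $ j * X $ i $ l
        - X $ k $ j * Z $ i $ l) / 2)"
| "qbr (XC i j) (WC a k) p = brUW (Xm p) i j (Wv p a) k"
| "qbr (WC a k) (XC i j) p = - brUW (Xm p) i j (Wv p a) k"
| "qbr (ZC i j) (WC a k) p = brUW (Zm p) i j (Wv p a) k"
| "qbr (WC a k) (ZC i j) p = - brUW (Zm p) i j (Wv p a) k"
| "qbr (XC i j) (VC a l) p = brUV (Xm p) i j (Vv p a) l"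
| "qbr (VC a l) (XC i j) p = - brUV (Xm p) i j (Vv p a) l"
| "qbr (ZC i j) (VC a l) p = brUV (Zm p) i j (Vv p a) l"
| "qbr (VC a l) (ZC i j) p = - brUV (Zm p) i j (Vv p a) l"
| "qbr (VC a j) (VC b l) p = osgn b a * (Vv p b $ j * Vv p a $ l + Vv p a $ j * Vv p b $ l) / 2"
| "qbr (WC a i) (WC b k) p = osgn b a * (Wv p b $ k * Wv p a $ i + Wv p a $ k * Wv p b $ i) / 2"
| "qbr (VC a j) (WC b k) p =
      dlt a b * (dlt k j + Wv p a $ k * Vv p a $ j / 2 + dlt k j * sp (Vv p a) (Wv p a) / 2)
      + osgn a b * (dlt k j * sp (Vv p a) (Wv p b) + Wv p b $ k * Vv p a $ j) / 2"
| "qbr (WC b k) (VC a j) p = - (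
      dlt a b * (dlt k j + Wv p a $ k * Vv p a $ j / 2 + dlt k j * sp (Vv p a) (Wv p a) / 2)
      + osgn a b * (dlt k j * sp (Vv p a) (Wv p b) + Wv p b $ k * Vv p a $ j) / 2)"

definition pd :: "('n pt \<Rightarrow> complex) \<Rightarrow> 'n coord \<Rightarrow> 'n pt \<Rightarrow> complex" where
  "pd H c p = deriv (\<lambda>z. H (p(c := z))) (p c)"

text \<open>{H, x_b}(p) for the biderivation determined by qbr:
  sum over all coordinates a of (dH/dx_a) {x_a, x_b}.\<close>
definition hvf :: "nat \<Rightarrow> ('n::finite pt \<Rightarrow> complex) \<Rightarrow> 'n coord \<Rightarrow> 'n pt \<Rightarrow> complex" where
  "hvf d H b p = (\<Sum>a\<in>coords d. pd H a p * qbr a b p)"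

definition claimed_flow :: "nat \<Rightarrow> nat \<Rightarrow> 'n::finite pt \<Rightarrow> complex \<Rightarrow> 'n pt" where
  "claimed_flow a k p t = (let Sk = mpow (Sm p a) k; E = mexp (msc t Sk); Ei = mexp (msc (- t) Sk) in
     (\<lambda>c. case c of
        XC i j \<Rightarrow> (Xm p ** Ei) $ i $ j
      | ZC i j \<Rightarrow> (E ** Zm p ** Ei) $ i $ j
      | VC b j \<Rightarrow> (if b \<le> a then (Vv p b v* Ei) $ j else p c)
      | WC b j \<Rightarrow> (if b \<le> a then (E *v Wv p b) $ j else p c)))"

end

theory Submission
  imports Defs
begin

lemma mpow_Suc_right: "mpow A (Suc m) = mpow A m ** A"
  by (induction m) (simp_all add: matrix_mul_assoc)

lemma mpow_comm: "B ** A = A ** B \<Longrightarrow> B ** mpow A m = mpow A m ** B"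
  by (induction m) (simp_all, metis matrix_mul_assoc)

lemma msc_mult_left: "msc t A ** B = msc t (A ** B)"
  by (simp add: msc_def matrix_matrix_mult_def vec_eq_iff sum_distrib_left mult.assoc)

lemma msc_mult_right: "A ** msc t B = msc t (A ** B)"
  by (simp add: msc_def matrix_matrix_mult_def vec_eq_iff sum_distrib_left mult_ac)

lemma mpow_msc: "mpow (msc t A) m = msc (t^m) (mpow A m)"
proof (induction m)
  case 0 show ?case by (simp add: msc_def mat_def vec_eq_iff)
next
  case (Suc m) then show ?case
    by (simp add: msc_mult_left msc_mult_right) (simp add: msc_def vec_eq_iff mult.assoc)
qed

definition es :: "complex^'n::finite^'n \<Rightarrow> 'n \<Rightarrow> 'n \<Rightarrow> complex \<Rightarrow> complex" where
  "es A i j t = (\<Sum>m. (mpow A m $ i $ j / fact m) * t ^ m)"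

lemma mpow_bound:
  fixes A :: "complex^'n::finite^'n"
  obtains C :: real where "C \<ge> 0" "\<And>m i j. norm (mpow A m $ i $ j) \<le> C ^ m"
proof -
  define B where "B = (\<Sum>i\<in>UNIV. \<Sum>j\<in>UNIV. norm (A $ i $ j))"
  define C where "C = real CARD('n) * B + 1"
  have Bij: "norm (A $ i $ j) \<le> B" for i j
  proof -
    have "norm (A $ i $ j) \<le> (\<Sum>j\<in>UNIV. norm (A $ i $ j))"
      by (rule member_le_sum) auto
    also have "\<dots> \<le> B" unfolding B_def
      by (rule member_le_sum[where f="\<lambda>i. \<Sum>j\<in>UNIV. norm (A $ i $ j)"]) (auto intro: sum_nonneg)
    finally show ?thesis .
  qed
  have B0: "B \<ge> 0" unfolding B_def by (auto intro!: sum_nonneg)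
  have C0: "C \<ge> 1" unfolding C_def using B0 by simp
  have "norm (mpow A m $ i $ j) \<le> C ^ m" for m i j
  proof (induction m arbitrary: i j)
    case 0 show ?case using C0 by (simp add: mat_def)
  next
    case (Suc m)
    have "norm (mpow A (Suc m) $ i $ j) = norm (\<Sum>l\<in>UNIV. A $ i $ l * mpow A m $ l $ j)"
      by (simp add: matrix_matrix_mult_def)
    also have "\<dots> \<le> (\<Sum>l\<in>UNIV. norm (A $ i $ l) * norm (mpow A m $ l $ j))"
      by (rule order_trans[OF norm_sum]) (simp add: norm_mult)
    also have "\<dots> \<le> (\<Sum>l\<in>(UNIV::'n set). B * C ^ m)"
      by (rule sum_mono, rule mult_mono) (use Bij Suc B0 in auto)
    also have "\<dots> = real CARD('n) * B * C ^ m" by simp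
    also have "\<dots> \<le> C * C ^ m"
      by (rule mult_right_mono) (use C0 in \<open>auto simp: C_def\<close>)
    finally show ?case by simp
  qed
  moreover have "0 \<le> C" using C0 by simp
  ultimately show ?thesis using that by blast
qed

lemma es_summable_norm:
  fixes A :: "complex^'n::finite^'n"
  shows "summable (\<lambda>m. norm ((mpow A m $ i $ j / fact m) * t ^ m))"
proof -
  obtain C where C: "C \<ge> 0" "\<And>m i j. norm (mpow A m $ i $ j) \<le> C ^ m" using mpow_bound[of A] by metis
  show ?thesis
  proof (rule summable_comparison_test')
    show "summable (\<lambda>m. inverse (fact m) * (C * norm t) ^ m)" by (rule summable_exp)
    fix m :: nat
    have "norm ((mpow A m $ i $ j / fact m) * t ^ m) = norm (mpow A m $ i $ j) / fact m * norm t ^ m"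
      by (simp add: norm_mult norm_divide norm_power)
    also have "\<dots> \<le> C ^ m / fact m * norm t ^ m"
      by (intro mult_right_mono divide_right_mono C(2)) auto
    also have "\<dots> = inverse (fact m) * (C * norm t) ^ m" by (simp add: power_mult_distrib field_simps)
    finally show "norm (norm ((mpow A m $ i $ j / fact m) * t ^ m)) \<le> inverse (fact m) * (C * norm t) ^ m" by simp
  qed
qed

lemma es_summable:
  fixes A :: "complex^'n::finite^'n"
  shows "summable (\<lambda>m. (mpow A m $ i $ j / fact m) * t ^ m)"
  by (rule summable_norm_cancel[OF es_summable_norm])

lemma mexp_entry:
  fixes A :: "complex^'n::finite^'n"
  shows "mexp (msc t A) $ i $ j = es A i j t"
proof -
  let ?f = "\<lambda>m. inverse (fact m) *\<^sub>R mpow (msc t A) m"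
  have ent: "?f m $ i $ j = (mpow A m $ i $ j / fact m) * t ^ m" for m i j
    by (simp add: mpow_msc) (simp add: msc_def vector_scaleR_component scaleR_conv_of_real field_simps)
  define G where "G = (\<lambda>m. \<Sum>i\<in>UNIV. \<Sum>j\<in>UNIV. norm ((mpow A m $ i $ j / fact m) * t ^ m))"
  have sG: "summable G" unfolding G_def
    by (intro summable_sum es_summable_norm)
  have nb: "norm (?f m) \<le> G m" for m
  proof -
    have "norm (?f m) \<le> (\<Sum>i\<in>UNIV. norm (?f m $ i))"
      unfolding norm_vec_def by (rule L2_set_le_sum) simp
    also have "\<dots> \<le> (\<Sum>i\<in>UNIV. \<Sum>j\<in>UNIV. norm (?f m $ i $ j))"
      by (rule sum_mono) (unfold norm_vec_def, rule L2_set_le_sum, simp)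
    also have "\<dots> = G m" unfolding G_def by (simp only: ent)
    finally show ?thesis .
  qed
  have "summable (\<lambda>m. norm (?f m))"
    by (rule summable_comparison_test'[OF sG]) (use nb in simp)
  then have sf: "summable ?f" by (rule summable_norm_cancel)
  have bl: "bounded_linear (\<lambda>x::complex^'n^'n. x $ i $ j)"
    using bounded_linear_compose[OF bounded_linear_vec_nth[of j] bounded_linear_vec_nth[of i]] by (simp add: o_def)
  have "mexp (msc t A) $ i $ j = (\<Sum>m. ?f m $ i $ j)"
    unfolding mexp_def using bounded_linear.suminf[OF bl sf] by simp
  also have "\<dots> = es A i j t" unfolding es_def by (simp only: ent)
  finally show ?thesis .
qed

lemma es_mult_left:
  fixes A :: "complex^'n::finite^'n"
  shows "(B ** mexp (msc t A)) $ i $ j = (\<Sum>m. ((B ** mpow A m) $ i $ j / fact m) * t ^ m)"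
proof -
  have "(B ** mexp (msc t A)) $ i $ j = (\<Sum>l\<in>UNIV. B$i$l * es A l j t)"
    by (simp add: matrix_matrix_mult_def mexp_entry)
  also have "\<dots> = (\<Sum>l\<in>UNIV. \<Sum>m. B$i$l * ((mpow A m $ l $ j / fact m) * t^m))"
    unfolding es_def by (intro sum.cong refl, rule suminf_mult[OF es_summable, symmetric])
  also have "\<dots> = (\<Sum>m. \<Sum>l\<in>UNIV. B$i$l * ((mpow A m $ l $ j / fact m) * t^m))"
    by (rule suminf_sum[symmetric]) (intro summable_mult es_summable)
  also have "\<dots> = (\<Sum>m. ((B ** mpow A m) $ i $ j / fact m) * t ^ m)"
    by (rule arg_cong[where f=suminf], rule ext)
       (simp add: matrix_matrix_mult_def sum_distrib_left sum_distrib_right sum_divide_distrib mult_ac)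
  finally show ?thesis .
qed

lemma es_mult_right:
  fixes A :: "complex^'n::finite^'n"
  shows "(mexp (msc t A) ** B) $ i $ j = (\<Sum>m. ((mpow A m ** B) $ i $ j / fact m) * t ^ m)"
proof -
  have "(mexp (msc t A) ** B) $ i $ j = (\<Sum>l\<in>UNIV. es A i l t * B$l$j)"
    by (simp add: matrix_matrix_mult_def mexp_entry)
  also have "\<dots> = (\<Sum>l\<in>UNIV. \<Sum>m. ((mpow A m $ i $ l / fact m) * t^m) * B$l$j)"
    unfolding es_def by (intro sum.cong refl, rule suminf_mult2[OF es_summable])
  also have "\<dots> = (\<Sum>m. \<Sum>l\<in>UNIV. ((mpow A m $ i $ l / fact m) * t^m) * B$l$j)"
    by (rule suminf_sum[symmetric]) (intro summable_mult2 es_summable)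
  also have "\<dots> = (\<Sum>m. ((mpow A m ** B) $ i $ j / fact m) * t ^ m)"
    by (rule arg_cong[where f=suminf], rule ext)
       (simp add: matrix_matrix_mult_def sum_distrib_left sum_distrib_right sum_divide_distrib mult_ac)
  finally show ?thesis .
qed

lemma mexp_comm:
  fixes A :: "complex^'n::finite^'n"
  assumes "B ** A = A ** B"
  shows "B ** mexp (msc t A) = mexp (msc t A) ** B"
  using mpow_comm[OF assms] by (simp add: vec_eq_iff es_mult_left es_mult_right)

lemma mexp_zero:
  fixes A :: "complex^'n::finite^'n"
  shows "mexp (msc 0 A) = mat 1"
proof -
  have "mexp (msc 0 A) $ i $ j = mat 1 $ i $ j" for i j
    using powser_zero[of "\<lambda>m. mpow A m $ i $ j / fact m"]
    by (simp add: mexp_entry es_def)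
  then show ?thesis by (simp add: vec_eq_iff)
qed

definition mder :: "(complex \<Rightarrow> complex^'n::finite^'m::finite) \<Rightarrow> complex^'n^'m \<Rightarrow> complex \<Rightarrow> bool" where
  "mder F F' t = (\<forall>i j. ((\<lambda>s. F s $ i $ j) has_field_derivative F' $ i $ j) (at t))"

lemma mder_mult:
  assumes "mder F F' t" "mder G G' t"
  shows "mder (\<lambda>s. F s ** G s) (F' ** G t + F t ** G') t"
  unfolding mder_def
proof (intro allI)
  fix i j
  have "((\<lambda>s. \<Sum>l\<in>UNIV. F s $ i $ l * G s $ l $ j) has_field_derivative
      (\<Sum>l\<in>UNIV. F' $ i $ l * G t $ l $ j + F t $ i $ l * G' $ l $ j)) (at t)"
    using assms unfolding mder_def
    by (intro DERIV_sum) (auto intro!: derivative_eq_intros)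
  then show "((\<lambda>s. (F s ** G s) $ i $ j) has_field_derivative (F' ** G t + F t ** G') $ i $ j) (at t)"
    by (simp add: matrix_matrix_mult_def sum.distrib)
qed

lemma mder_const: "mder (\<lambda>s. B) 0 t"
  unfolding mder_def by simp

lemma mder_exp:
  fixes A :: "complex^'n::finite^'n"
  shows "mder (\<lambda>s. mexp (msc s A)) (A ** mexp (msc t A)) t"
  unfolding mder_def
proof (intro allI)
  fix i j
  define c where "c = (\<lambda>m. mpow A m $ i $ j / fact m)"
  have f: "(\<lambda>s. mexp (msc s A) $ i $ j) = (\<lambda>s. \<Sum>m. c m * s ^ m)"
    by (simp add: mexp_entry es_def c_def)
  have d: "diffs c m = (A ** mpow A m) $ i $ j / fact m" for m
    by (simp add: diffs_def c_def field_simps del: of_nat_Suc)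
  have "((\<lambda>s. \<Sum>m. c m * s ^ m) has_field_derivative (\<Sum>m. diffs c m * t ^ m)) (at t)"
    by (rule termdiffs_strong_converges_everywhere) (unfold c_def, rule es_summable)
  then show "((\<lambda>s. mexp (msc s A) $ i $ j) has_field_derivative (A ** mexp (msc t A)) $ i $ j) (at t)"
    by (simp add: f d es_mult_left)
qed

lemma mder_exp_neg:
  fixes A :: "complex^'n::finite^'n"
  shows "mder (\<lambda>s. mexp (msc (-s) A)) (- (A ** mexp (msc (-t) A))) t"
  unfolding mder_def
proof (intro allI)
  fix i j
  have d: "((\<lambda>s. mexp (msc s A) $ i $ j) has_field_derivative (A ** mexp (msc (-t) A)) $ i $ j) (at (-t))"
    using mder_exp[of A "-t"] unfolding mder_def by blast
  have u: "(uminus has_field_derivative -1) (at t)"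
    by (rule DERIV_minus[OF DERIV_ident])
  have "((\<lambda>s. mexp (msc (-s) A) $ i $ j) has_field_derivative (A ** mexp (msc (-t) A)) $ i $ j * (-1)) (at t)"
    by (rule DERIV_chain2[OF d u])
  then show "((\<lambda>s. mexp (msc (-s) A) $ i $ j) has_field_derivative (- (A ** mexp (msc (-t) A))) $ i $ j) (at t)"
    by simp
qed

lemma mexp_inv:
  fixes A :: "complex^'n::finite^'n"
  shows "mexp (msc t A) ** mexp (msc (-t) A) = mat 1"
proof -
  have "(mexp (msc t A) ** mexp (msc (-t) A)) $ i $ j = mat 1 $ i $ j" for i j
  proof -
    let ?g = "\<lambda>s. (mexp (msc s A) ** mexp (msc (-s) A)) $ i $ j"
    have "(?g has_field_derivative 0) (at s within UNIV)" for s
    proof -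
      have "mder (\<lambda>s. mexp (msc s A) ** mexp (msc (-s) A))
         ((A ** mexp (msc s A)) ** mexp (msc (-s) A) + mexp (msc s A) ** (- (A ** mexp (msc (-s) A)))) s"
        by (rule mder_mult[OF mder_exp mder_exp_neg])
      moreover have "(A ** mexp (msc s A)) ** mexp (msc (-s) A) + mexp (msc s A) ** (- (A ** mexp (msc (-s) A))) = 0"
      proof -
        have n: "X ** (- Y) = - (X ** Y)" for X Y :: "complex^'n^'n"
          by (simp add: matrix_matrix_mult_def vec_eq_iff sum_negf)
        show ?thesis using mexp_comm[of A A s]
          by (simp add: n matrix_mul_assoc)
      qed
      ultimately show ?thesis unfolding mder_def by simp
    qed
    then obtain c where "\<forall>s\<in>UNIV. ?g s = c"
      using has_field_derivative_zero_constant[of UNIV ?g] by auto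
    then have "?g t = ?g 0" by (metis UNIV_I)
    then show ?thesis by (simp add: mexp_zero)
  qed
  then show ?thesis by (simp add: vec_eq_iff)
qed

typedef (overloaded) ('n::finite) sq = "UNIV :: (complex^'n^'n) set"
  morphisms mtx Sq by simp

setup_lifting type_definition_sq

lemma matrix_add_rdistrib': "((B::complex^'n::finite^'n) + C) ** A = B ** A + C ** A"
  by (simp add: matrix_matrix_mult_def vec_eq_iff sum.distrib distrib_right)

lemma matrix_neg_left: "(- (B::complex^'n::finite^'n)) ** A = - (B ** A)"
  by (simp add: matrix_matrix_mult_def vec_eq_iff sum_negf)
lemma matrix_neg_right: "(B::complex^'n::finite^'n) ** (- A) = - (B ** A)"
  by (simp add: matrix_matrix_mult_def vec_eq_iff sum_negf)

instantiation sq :: (finite) ring_1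
begin
lift_definition zero_sq :: "'a sq" is "0" .
lift_definition one_sq :: "'a sq" is "mat 1" .
lift_definition plus_sq :: "'a sq \<Rightarrow> 'a sq \<Rightarrow> 'a sq" is "(+)" .
lift_definition minus_sq :: "'a sq \<Rightarrow> 'a sq \<Rightarrow> 'a sq" is "(-)" .
lift_definition uminus_sq :: "'a sq \<Rightarrow> 'a sq" is "uminus" .
lift_definition times_sq :: "'a sq \<Rightarrow> 'a sq \<Rightarrow> 'a sq" is "(**)" .
instance
proof
  fix a b c :: "'a sq"
  show "a * b * c = a * (b * c)" by transfer (simp add: matrix_mul_assoc)
  show "1 * a = a" by transfer simp
  show "a * 1 = a" by transfer simp
  show "(a + b) * c = a * c + b * c" by transfer (rule matrix_add_rdistrib')
  show "a * (b + c) = a * b + a * c" by transfer (rule matrix_add_ldistrib)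
  show "a + b + c = a + (b + c)" by transfer (simp add: add.assoc)
  show "a + b = b + a" by transfer (simp add: add.commute)
  show "0 + a = a" by transfer simp
  show "- a + a = 0" by transfer simp
  show "a - b = a + - b" by transfer simp
  show "(0::'a sq) \<noteq> 1" by transfer (simp add: vec_eq_iff mat_def)
qed
end

lemma Sq_mult: "Sq (A ** B) = Sq A * Sq B"
  by (simp add: times_sq.abs_eq)
lemma Sq_add: "Sq (A + B) = Sq A + Sq B"
  by (simp add: plus_sq.abs_eq)
lemma Sq_diff: "Sq (A - B) = Sq A - Sq B"
  by (simp add: minus_sq.abs_eq)
lemma Sq_neg: "Sq (- A) = - Sq A"
  by (simp add: uminus_sq.abs_eq)
lemma Sq_one: "Sq (mat 1) = 1"
  by (simp add: one_sq.abs_eq)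
lemma Sq_zero: "Sq 0 = 0"
  by (simp add: zero_sq.abs_eq)
lemma Sq_inj: "Sq A = Sq B \<longleftrightarrow> A = B"
  by (simp add: Sq_inject)

lemmas Sq_simps = Sq_mult Sq_add Sq_diff Sq_neg Sq_one Sq_zero

definition tr :: "'n::finite sq \<Rightarrow> complex" where "tr x = trace (mtx x)"

lemma tr_Sq: "tr (Sq A) = trace A" by (simp add: tr_def Sq_inverse)
lemma tr_comm: "tr (x * y) = tr (y * x)"
  unfolding tr_def by transfer (rule trace_mul_sym)
lemma tr_add: "tr (x + y) = tr x + tr y"
  unfolding tr_def by transfer (simp add: trace_def sum.distrib)
lemma tr_diff: "tr (x - y) = tr x - tr y"
  unfolding tr_def by transfer (simp add: trace_def sum_subtractf)
lemma tr_neg: "tr (- x) = - tr x"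
  unfolding tr_def by transfer (simp add: trace_def sum_negf)



inductive pfn :: "('n::finite pt \<Rightarrow> complex) \<Rightarrow> bool" where
  pconst: "pfn (\<lambda>q. c)"
| pcoord: "pfn (\<lambda>q. q x)"
| padd: "pfn F \<Longrightarrow> pfn G \<Longrightarrow> pfn (\<lambda>q. F q + G q)"
| pmul: "pfn F \<Longrightarrow> pfn G \<Longrightarrow> pfn (\<lambda>q. F q * G q)"
| psum: "(\<And>i. pfn (F i)) \<Longrightarrow> pfn (\<lambda>q. \<Sum>i\<in>(UNIV::'n set). F i q)"

lemma pd_eqI: "((\<lambda>z. F (q(c:=z))) has_field_derivative D) (at (q c)) \<Longrightarrow> pd F c q = D"
  unfolding pd_def by (rule DERIV_imp_deriv)

lemma pd_DERIV_I: "((\<lambda>z. F (q(c:=z))) has_field_derivative D) (at (q c)) \<Longrightarrow>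
   ((\<lambda>z. F (q(c:=z))) has_field_derivative pd F c q) (at (q c))"
  using pd_eqI by metis

lemma pfn_DERIV: "pfn F \<Longrightarrow> ((\<lambda>z. F (q(c:=z))) has_field_derivative pd F c q) (at (q c))"
proof (induction rule: pfn.induct)
  case (pconst c')
  show ?case by (rule pd_DERIV_I) (rule DERIV_const)
next
  case (pcoord x)
  show ?case
  proof (rule pd_DERIV_I)
    show "((\<lambda>z. (q(c:=z)) x) has_field_derivative (if x = c then 1 else 0)) (at (q c))"
      by (cases "x = c") (auto intro!: derivative_eq_intros)
  qed
next
  case (padd F G)
  show ?case by (rule pd_DERIV_I, rule DERIV_add[OF padd.IH])
next
  case (pmul F G)
  show ?case by (rule pd_DERIV_I, rule DERIV_mult[OF pmul.IH])
next
  case (psum F)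
  show ?case by (rule pd_DERIV_I, rule DERIV_sum) (rule psum.IH)
qed

lemma pd_const: "pd (\<lambda>q. c) x q = 0"
  by (rule pd_eqI) (rule DERIV_const)
lemma pd_coord: "pd (\<lambda>q. q y) x q = (if y = x then 1 else 0)"
  by (rule pd_eqI) (cases "y = x"; auto intro!: derivative_eq_intros)
lemma pd_add: "pfn F \<Longrightarrow> pfn G \<Longrightarrow> pd (\<lambda>q. F q + G q) x q = pd F x q + pd G x q"
  by (rule pd_eqI) (intro DERIV_add pfn_DERIV)
lemma pd_mul: "pfn F \<Longrightarrow> pfn G \<Longrightarrow> pd (\<lambda>q. F q * G q) x q = pd F x q * G q + F q * pd G x q"
proof -
  assume a: "pfn F" "pfn G"
  have "((\<lambda>z. F (q(x:=z)) * G (q(x:=z))) has_field_derivative pd F x q * G (q(x:=q x)) + pd G x q * F (q(x:=q x))) (at (q x))"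
    by (rule DERIV_mult[OF pfn_DERIV[OF a(1)] pfn_DERIV[OF a(2)]])
  then show ?thesis by (intro pd_eqI) (simp add: mult.commute)
qed
lemma pd_sum: "finite (A::'n::finite set) \<Longrightarrow> (\<And>i. i \<in> A \<Longrightarrow> pfn (F i)) \<Longrightarrow> pd (\<lambda>q. \<Sum>i\<in>A. F i q) x q = (\<Sum>i\<in>A. pd (F i) x q)"
  by (rule pd_eqI) (intro DERIV_sum pfn_DERIV, auto)

lemma finite_coords: "finite (coords d :: 'n::finite coord set)"
proof -
  have "coords d \<subseteq> (\<lambda>(i,j). XC i j) ` UNIV \<union> (\<lambda>(i,j). ZC i j) ` UNIV \<union>
      (\<lambda>(a,j). VC a j) ` ({1..d} \<times> UNIV) \<union> (\<lambda>(a,j). WC a j) ` ({1..d} \<times> UNIV)"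
    unfolding coords_def by force
  moreover have "finite ((\<lambda>(i,j). XC i j) ` (UNIV::('n\<times>'n) set) \<union> (\<lambda>(i,j). ZC i j) ` UNIV \<union>
      (\<lambda>(a,j). VC a j) ` ({1..d} \<times> (UNIV::'n set)) \<union> (\<lambda>(a,j). WC a j) ` ({1..d} \<times> UNIV))"
    by auto
  ultimately show ?thesis by (rule finite_subset)
qed

lemma hvf_const: "hvf d (\<lambda>q. c) x q = 0"
  by (simp add: hvf_def pd_const)
lemma hvf_coord: "y \<in> coords d \<Longrightarrow> hvf d (\<lambda>q. q y) x q = qbr y x q"
proof -
  assume y: "y \<in> coords d"
  have "hvf d (\<lambda>q. q y) x q = (\<Sum>a\<in>coords d. if y = a then qbr a x q else 0)"
    unfolding hvf_def pd_coord by (rule sum.cong) auto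
  also have "\<dots> = qbr y x q" using y by (simp add: finite_coords)
  finally show ?thesis .
qed
lemma hvf_add: "pfn F \<Longrightarrow> pfn G \<Longrightarrow> hvf d (\<lambda>q. F q + G q) x q = hvf d F x q + hvf d G x q"
  by (simp add: hvf_def pd_add distrib_right sum.distrib)
lemma hvf_mul: "pfn F \<Longrightarrow> pfn G \<Longrightarrow> hvf d (\<lambda>q. F q * G q) x q = hvf d F x q * G q + F q * hvf d G x q"
  unfolding hvf_def sum_distrib_left sum_distrib_right sum.distrib[symmetric]
  by (rule sum.cong) (simp_all add: pd_mul algebra_simps)
lemma hvf_sum: "finite (A::'n::finite set) \<Longrightarrow> (\<And>i. i \<in> A \<Longrightarrow> pfn (F i)) \<Longrightarrow> hvf d (\<lambda>q. \<Sum>i\<in>A. F i q) x q = (\<Sum>i\<in>A. hvf d (F i) x q)"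
  unfolding hvf_def by (simp add: pd_sum sum_distrib_right) (rule sum.swap)

definition mp :: "('n::finite pt \<Rightarrow> complex^'n^'n) \<Rightarrow> bool" where
  "mp M = (\<forall>i j. pfn (\<lambda>q. M q $ i $ j))"

definition BRm :: "nat \<Rightarrow> ('n::finite pt \<Rightarrow> complex^'n^'n) \<Rightarrow> 'n coord \<Rightarrow> 'n pt \<Rightarrow> complex^'n^'n" where
  "BRm d M x q = (\<chi> i j. hvf d (\<lambda>q. M q $ i $ j) x q)"

lemma mp_mult: "mp A \<Longrightarrow> mp B \<Longrightarrow> mp (\<lambda>q. A q ** B q)"
  unfolding mp_def matrix_matrix_mult_def by (auto intro!: psum pmul)

lemma BRm_mult: "mp A \<Longrightarrow> mp B \<Longrightarrow> BRm d (\<lambda>q. A q ** B q) x q = BRm d A x q ** B q + A q ** BRm d B x q"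
  unfolding BRm_def matrix_matrix_mult_def mp_def
  by (simp add: vec_eq_iff hvf_sum hvf_mul pmul sum.distrib)

lemma mp_const: "mp (\<lambda>q. B)"
  unfolding mp_def by (auto intro: pconst)
lemma BRm_const: "BRm d (\<lambda>q. B) x q = 0"
  unfolding BRm_def by (simp add: hvf_const vec_eq_iff)

lemma mp_mpow: "mp M \<Longrightarrow> mp (\<lambda>q. mpow (M q) m)"
  by (induction m) (simp_all add: mp_const mp_mult)

lemma BRm_mpow_Suc: "mp M \<Longrightarrow> BRm d (\<lambda>q. mpow (M q) (Suc m)) x q =
   BRm d M x q ** mpow (M q) m + M q ** BRm d (\<lambda>q. mpow (M q) m) x q"
  using BRm_mult[of M "\<lambda>q. mpow (M q) m"] by (simp add: mp_mpow)

lemma BRm_mpow_0: "BRm d (\<lambda>q. mpow (M q) 0) x q = 0"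
  by (simp add: BRm_const)

lemma Sq_mpow: "Sq (mpow A m) = Sq A ^ m"
  by (induction m) (simp_all add: Sq_simps)

lemma pow_comm: "(c::'a::ring_1) * s = s * c \<Longrightarrow> c * s ^ m = s ^ m * c"
  by (induction m) (simp_all, metis mult.assoc power_commutes)

lemma tr_BRm_mpow:
  assumes "mp M"
  shows "c * Sq (M q) = Sq (M q) * c \<Longrightarrow>
    tr (c * Sq (BRm d (\<lambda>q. mpow (M q) (Suc m)) x q)) = of_nat (Suc m) * tr (c * Sq (M q) ^ m * Sq (BRm d M x q))"
proof (induction m arbitrary: c)
  case 0
  then show ?case using assms by (simp add: BRm_mpow_Suc BRm_mpow_0 Sq_simps Sq_mpow)
next
  case (Suc m)
  let ?s = "Sq (M q)" and ?b = "Sq (BRm d M x q)"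
  have "Sq (BRm d (\<lambda>q. mpow (M q) (Suc (Suc m))) x q) = ?b * ?s ^ Suc m + ?s * Sq (BRm d (\<lambda>q. mpow (M q) (Suc m)) x q)"
    using assms by (simp only: BRm_mpow_Suc Sq_simps Sq_mpow)
  then have "tr (c * Sq (BRm d (\<lambda>q. mpow (M q) (Suc (Suc m))) x q))
     = tr (c * ?b * ?s ^ Suc m) + tr ((c * ?s) * Sq (BRm d (\<lambda>q. mpow (M q) (Suc m)) x q))"
    by (simp add: algebra_simps tr_add)
  also have "tr ((c * ?s) * Sq (BRm d (\<lambda>q. mpow (M q) (Suc m)) x q)) = of_nat (Suc m) * tr (c * ?s * ?s ^ m * ?b)"
    using Suc.IH[of "c * ?s"] Suc.prems by (simp add: mult.assoc)
  also have "tr (c * ?b * ?s ^ Suc m) = tr (c * ?s ^ Suc m * ?b)"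
    using tr_comm[of "c * ?b" "?s ^ Suc m"] pow_comm[OF Suc.prems, of "Suc m"]
    by (simp add: mult.assoc)
  finally show ?case
    by (simp add: mult.assoc power_commutes algebra_simps)
qed

lemma mp_Zm: "mp (\<lambda>q. Zm q)"
  unfolding mp_def Zm_def by (auto intro: pcoord)

lemma mp_Pm: "mp (\<lambda>q. Pm q b)"
  unfolding mp_def Pm_def Wv_def Vv_def mat_def by (auto intro!: padd pmul pcoord pconst)

lemma mp_Sm: "mp (\<lambda>q. Sm q b)"
  by (induction b) (simp_all add: mp_Zm mp_mult mp_Pm)

lemma ZC_coords: "ZC i j \<in> coords d" unfolding coords_def by auto
lemma WC_coords: "b \<in> {1..d} \<Longrightarrow> WC b i \<in> coords d" unfolding coords_def by auto
lemma VC_coords: "b \<in> {1..d} \<Longrightarrow> VC b i \<in> coords d" unfolding coords_def by auto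

lemma BRm_Zm: "BRm d (\<lambda>q. Zm q) x q = (\<chi> i j. qbr (ZC i j) x q)"
  unfolding BRm_def Zm_def by (simp add: hvf_coord ZC_coords)

lemma BRm_Pm: "b \<in> {1..d} \<Longrightarrow> BRm d (\<lambda>q. Pm q b) x q =
   (\<chi> i j. qbr (WC b i) x q * q (VC b j) + q (WC b i) * qbr (VC b j) x q)"
proof -
  assume b: "b \<in> {1..d}"
  have e: "(\<lambda>q. Pm q b $ i $ j) = (\<lambda>q. (if i = j then 1 else 0) + q (WC b i) * q (VC b j))" for i j
    by (simp add: Pm_def Wv_def Vv_def mat_def fun_eq_iff)
  have "hvf d (\<lambda>q. (if i = j then 1 else 0) + q (WC b i) * q (VC b j)) x q
     = qbr (WC b i) x q * q (VC b j) + q (WC b i) * qbr (VC b j) x q" for i j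
    by (simp add: hvf_add[OF pconst pmul[OF pcoord pcoord]] hvf_mul[OF pcoord pcoord] hvf_const
        hvf_coord[OF WC_coords[OF b]] hvf_coord[OF VC_coords[OF b]])
  then show ?thesis unfolding BRm_def e by simp
qed

lemma BRm_Sm_Suc: "BRm d (\<lambda>q. Sm q (Suc b)) x q =
   BRm d (\<lambda>q. Pm q (Suc b)) x q ** Sm q b + Pm q (Suc b) ** BRm d (\<lambda>q. Sm q b) x q"
  using BRm_mult[OF mp_Pm[of "Suc b"] mp_Sm[of b]] by simp

lemma hvf_Ham:
  assumes "k \<ge> 1"
  shows "hvf d (Ham a k) x q = trace (mpow (Sm q a) (k - 1) ** BRm d (\<lambda>q. Sm q a) x q)"
proof -
  obtain m where k: "k = Suc m" using assms by (cases k) auto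
  have H: "Ham a k = (\<lambda>q. (1 / of_nat k) * (\<Sum>i\<in>UNIV. mpow (Sm q a) k $ i $ i))"
    by (simp add: Ham_def trace_def fun_eq_iff)
  have pe: "pfn (\<lambda>q. mpow (Sm q a) k $ i $ j)" for i j
    using mp_mpow[OF mp_Sm] unfolding mp_def by blast
  have "hvf d (Ham a k) x q = (1 / of_nat k) * (\<Sum>i\<in>UNIV. hvf d (\<lambda>q. mpow (Sm q a) k $ i $ i) x q)"
    unfolding H
    by (simp only: hvf_mul[OF pconst psum[where F="\<lambda>i q. mpow (Sm q a) k $ i $ i", OF pe]]
        hvf_const hvf_sum[OF finite pe]) simp
  also have "(\<Sum>i\<in>UNIV. hvf d (\<lambda>q. mpow (Sm q a) k $ i $ i) x q) = trace (BRm d (\<lambda>q. mpow (Sm q a) k) x q)"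
    by (simp add: trace_def BRm_def)
  also have "\<dots> = tr (1 * Sq (BRm d (\<lambda>q. mpow (Sm q a) (Suc m)) x q))"
    by (simp add: tr_Sq k)
  also have "\<dots> = of_nat (Suc m) * tr (1 * Sq (Sm q a) ^ m * Sq (BRm d (\<lambda>q. Sm q a) x q))"
    by (rule tr_BRm_mpow[OF mp_Sm]) simp
  also have "\<dots> = of_nat k * trace (mpow (Sm q a) (k - 1) ** BRm d (\<lambda>q. Sm q a) x q)"
    by (simp add: k Sq_mpow[symmetric] Sq_mult[symmetric] tr_Sq)
  finally show ?thesis using assms by simp
qed

definition unitm :: "'n::finite \<Rightarrow> 'n \<Rightarrow> complex^'n^'n" where
  "unitm l k = (\<chi> r s. dlt r l * dlt k s)"
definition outer :: "complex^'n::finite \<Rightarrow> complex^'n \<Rightarrow> complex^'n^'n" where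
  "outer w v = (\<chi> i j. w $ i * v $ j)"

lemma sum_dlt1: "(\<Sum>r\<in>UNIV. f r * dlt r (l::'n::finite)) = f l" (is "_ = ?r")
proof -
  have "(\<Sum>r\<in>UNIV. f r * dlt r l) = (\<Sum>r\<in>UNIV. if r = l then f r else 0)"
    by (rule sum.cong) (auto simp: dlt_def)
  also have "\<dots> = ?r" by (simp add: sum.delta)
  finally show ?thesis .
qed
lemma sum_dlt2: "(\<Sum>r\<in>UNIV. dlt (k::'n::finite) r * f r) = f k" (is "_ = ?r")
proof -
  have "(\<Sum>r\<in>UNIV. dlt k r * f r) = (\<Sum>r\<in>UNIV. if r = k then f r else 0)"
    by (rule sum.cong) (auto simp: dlt_def)
  also have "\<dots> = ?r" by (simp add: sum.delta)
  finally show ?thesis .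
qed

lemma mm_nth: "(A ** B) $ i $ j = (\<Sum>r\<in>UNIV. A $ i $ r * B $ r $ j)"
  by (simp add: matrix_matrix_mult_def)

lemma unitm_right: "(A ** unitm l k) $ i $ j = A $ i $ l * dlt k j"
proof -
  have "(A ** unitm l k) $ i $ j = (\<Sum>r\<in>UNIV. (A $ i $ r * dlt k j) * dlt r l)"
    by (simp add: matrix_matrix_mult_def unitm_def mult_ac)
  also have "\<dots> = A $ i $ l * dlt k j" by (rule sum_dlt1)
  finally show ?thesis .
qed
lemma unitm_left: "(unitm l k ** B) $ i $ j = dlt i l * B $ k $ j"
proof -
  have "(unitm l k ** B) $ i $ j = (\<Sum>r\<in>UNIV. dlt k r * (dlt i l * B $ r $ j))"
    by (simp add: matrix_matrix_mult_def unitm_def mult_ac)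
  also have "\<dots> = dlt i l * B $ k $ j" by (rule sum_dlt2)
  finally show ?thesis .
qed
lemma unitm_mid2: "(A ** (unitm l k ** B)) $ i $ j = A $ i $ l * B $ k $ j"
proof -
  have "(A ** (unitm l k ** B)) $ i $ j = (\<Sum>r\<in>UNIV. (A $ i $ r * B $ k $ j) * dlt r l)"
    by (simp only: mm_nth[of A] unitm_left) (simp add: mult_ac)
  also have "\<dots> = A $ i $ l * B $ k $ j" by (rule sum_dlt1)
  finally show ?thesis .
qed
lemma outer_nth: "outer w v $ i $ j = w $ i * v $ j"
  by (simp add: outer_def)
lemma outer_right: "(A ** outer w v) $ i $ j = (A *v w) $ i * v $ j"
  by (simp add: matrix_matrix_mult_def outer_def matrix_vector_mult_def sum_distrib_right sum_distrib_left mult_ac)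
lemma outer_left: "(outer w v ** B) $ i $ j = w $ i * (v v* B) $ j"
  by (simp add: matrix_matrix_mult_def outer_def vector_matrix_mult_def sum_distrib_left mult_ac)

lemma Pm_outer: "Pm q b = mat 1 + outer (Wv q b) (Vv q b)"
  by (simp add: Pm_def outer_def)

lemma BRm_Pm': "b \<in> {1..d} \<Longrightarrow> BRm d (\<lambda>q. Pm q b) x q =
   (\<chi> i j. qbr (WC b i) x q * Vv q b $ j + Wv q b $ i * qbr (VC b j) x q)"
  by (simp add: BRm_Pm Vv_def Wv_def)

lemma BRm_Zm_X: "BRm d (\<lambda>q. Zm q) (XC k l) q + BRm d (\<lambda>q. Zm q) (XC k l) q =
   - ((Zm q ** Xm q) ** unitm l k + unitm l k ** (Xm q ** Zm q)
      + Zm q ** (unitm l k ** Xm q) - Xm q ** (unitm l k ** Zm q))"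
  by (simp add: vec_eq_iff BRm_Zm unitm_right unitm_left unitm_mid2 Let_def field_simps)

lemma BRm_Pm_X: "b \<in> {1..d} \<Longrightarrow>
   BRm d (\<lambda>q. Pm q b) (XC k l) q + BRm d (\<lambda>q. Pm q b) (XC k l) q =
   - (unitm l k ** (Xm q ** outer (Wv q b) (Vv q b)) - Xm q ** (unitm l k ** outer (Wv q b) (Vv q b))
      + (outer (Wv q b) (Vv q b) ** Xm q) ** unitm l k - outer (Wv q b) (Vv q b) ** (unitm l k ** Xm q))"
  by (simp add: vec_eq_iff BRm_Pm' unitm_right unitm_left unitm_mid2 outer_right outer_left outer_nth
      brUW_def brUV_def field_simps)

lemma Sq_Pm: "Sq (Pm q b) = 1 + Sq (outer (Wv q b) (Vv q b))"
  by (simp add: Pm_outer Sq_simps)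

lemma BR_S_X:
  "b \<le> d \<Longrightarrow> Sq (BRm d (\<lambda>q. Sm q b) (XC k l) q) + Sq (BRm d (\<lambda>q. Sm q b) (XC k l) q) =
    - (Sq (Sm q b) * Sq (Xm q) * Sq (unitm l k) + Sq (unitm l k) * Sq (Xm q) * Sq (Sm q b)
       + Sq (Sm q b) * Sq (unitm l k) * Sq (Xm q) - Sq (Xm q) * Sq (unitm l k) * Sq (Sm q b))"
proof (induction b)
  case 0
  show ?case using arg_cong[OF BRm_Zm_X[of d k l q], of Sq, unfolded Sq_simps]
    by (simp add: algebra_simps)
next
  case (Suc b)
  let ?n = "Sq (outer (Wv q (Suc b)) (Vv q (Suc b)))"
  let ?BP = "Sq (BRm d (\<lambda>q. Pm q (Suc b)) (XC k l) q)"
  let ?BS = "Sq (BRm d (\<lambda>q. Sm q b) (XC k l) q)"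
  have bd: "Suc b \<in> {1..d}" using Suc.prems by simp
  have BP: "?BP + ?BP = - (Sq (unitm l k) * Sq (Xm q) * ?n - Sq (Xm q) * Sq (unitm l k) * ?n
      + ?n * Sq (Xm q) * Sq (unitm l k) - ?n * Sq (unitm l k) * Sq (Xm q))"
    using arg_cong[OF BRm_Pm_X[OF bd, of k l q], of Sq, unfolded Sq_simps] by (simp add: algebra_simps)
  have e: "Sq (BRm d (\<lambda>q. Sm q (Suc b)) (XC k l) q) = ?BP * Sq (Sm q b) + Sq (Pm q (Suc b)) * ?BS"
    by (simp only: BRm_Sm_Suc Sq_simps)
  have "Sq (BRm d (\<lambda>q. Sm q (Suc b)) (XC k l) q) + Sq (BRm d (\<lambda>q. Sm q (Suc b)) (XC k l) q)
     = (?BP + ?BP) * Sq (Sm q b) + Sq (Pm q (Suc b)) * (?BS + ?BS)"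
    unfolding e by (simp add: algebra_simps)
  also have "\<dots> = - (Sq (Sm q (Suc b)) * Sq (Xm q) * Sq (unitm l k) + Sq (unitm l k) * Sq (Xm q) * Sq (Sm q (Suc b))
       + Sq (Sm q (Suc b)) * Sq (unitm l k) * Sq (Xm q) - Sq (Xm q) * Sq (unitm l k) * Sq (Sm q (Suc b)))"
    unfolding BP Suc.IH[OF Suc_leD[OF Suc.prems]]
    by (simp add: Sq_simps Sq_Pm algebra_simps)
  finally show ?case .
qed

lemma trace_unitm: "trace (M ** unitm j i) = M $ i $ j"
proof -
  have "trace (M ** unitm j i) = (\<Sum>r\<in>UNIV. dlt i r * M $ r $ j)"
    by (simp add: trace_def unitm_right mult.commute)
  also have "\<dots> = M $ i $ j" by (rule sum_dlt2)
  finally show ?thesis .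
qed

lemma pow_left_comm: "(s::'a::ring_1)^m * (s * y) = s * (s^m * y)"
  by (metis mult.assoc power_commutes)

lemma tr_rot3: "tr (a * b * c) = tr (c * a * b)"
  by (metis tr_comm mult.assoc)

lemma ring_trace_X:
  fixes s x u :: "'n::finite sq"
  shows "tr (s^m * (-(s * x * u + u * x * s + s * u * x - x * u * s))) = -(tr (x * s^(Suc m) * u) + tr (x * s^(Suc m) * u))"
proof -
  have h1: "tr (s^m * (s * x * u)) = tr (x * u * s^Suc m)"
  proof -
    have "s^m * (s * x * u) = s^Suc m * (x * u)" by (metis mult.assoc power_commutes power_Suc)
    then show ?thesis using tr_comm[of "s^Suc m" "x * u"] by (simp add: mult.assoc)
  qed
  have h2: "tr (s^m * (u * x * s)) = tr (x * s^Suc m * u)"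
    using tr_rot3[of "s^m * u" x s] tr_rot3[of "s^m" u "x * s"] tr_comm[of "s^m * u * x" s] tr_rot3[of u x "s^Suc m"]
    by (simp add: mult.assoc power_commutes pow_left_comm)
  have h3: "tr (s^m * (s * u * x)) = tr (x * s^Suc m * u)"
    using tr_comm[of "s^Suc m * u" x] by (simp add: mult.assoc power_commutes pow_left_comm)
  have h4: "tr (s^m * (x * u * s)) = tr (x * u * s^Suc m)"
    using tr_comm[of "s^m * x * u" s] tr_comm[of "s^Suc m" "x * u"] by (simp add: mult.assoc power_commutes pow_left_comm)
  have "tr (s^m * (-(s * x * u + u * x * s + s * u * x - x * u * s))) =
     -(tr (s^m * (s * x * u)) + tr (s^m * (u * x * s)) + tr (s^m * (s * u * x)) - tr (s^m * (x * u * s)))"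
    by (simp add: algebra_simps tr_add tr_diff tr_neg)
  then show ?thesis by (simp add: h1 h2 h3 h4)
qed

lemma dbl: "(x::complex) + x = y + y \<Longrightarrow> x = y" by simp

lemma hvf_via_tr:
  assumes "k = Suc m"
  shows "hvf d (Ham a k) x q + hvf d (Ham a k) x q =
    tr (Sq (Sm q a) ^ m * (Sq (BRm d (\<lambda>q. Sm q a) x q) + Sq (BRm d (\<lambda>q. Sm q a) x q)))"
proof -
  have "hvf d (Ham a k) x q = tr (Sq (Sm q a) ^ m * Sq (BRm d (\<lambda>q. Sm q a) x q))"
    using hvf_Ham[of k d a x q] assms by (simp add: tr_Sq[symmetric] Sq_simps Sq_mpow)
  then show ?thesis by (simp add: distrib_left tr_add)
qed

lemma hvf_X:
  assumes "k \<ge> 1" "a \<le> d"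
  shows "hvf d (Ham a k) (XC i j) q = - (Xm q ** mpow (Sm q a) k) $ i $ j"
proof -
  obtain m where k: "k = Suc m" using assms by (cases k) auto
  have "hvf d (Ham a k) (XC i j) q + hvf d (Ham a k) (XC i j) q
     = -(tr (Sq (Xm q) * Sq (Sm q a)^(Suc m) * Sq (unitm j i)) + tr (Sq (Xm q) * Sq (Sm q a)^(Suc m) * Sq (unitm j i)))"
    unfolding hvf_via_tr[OF k] BR_S_X[OF assms(2)] by (rule ring_trace_X)
  also have "tr (Sq (Xm q) * Sq (Sm q a)^(Suc m) * Sq (unitm j i)) = (Xm q ** mpow (Sm q a) k) $ i $ j"
    by (simp only: k Sq_mpow[symmetric] Sq_mult[symmetric] tr_Sq trace_unitm)
  finally show ?thesis by simp
qed

lemma BRm_Zm_Z: "BRm d (\<lambda>q. Zm q) (ZC k l) q + BRm d (\<lambda>q. Zm q) (ZC k l) q =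
   (Zm q ** Zm q) ** unitm l k - unitm l k ** (Zm q ** Zm q)"
  by (simp add: vec_eq_iff BRm_Zm unitm_right unitm_left Let_def field_simps)

lemma BRm_Pm_Z: "b \<in> {1..d} \<Longrightarrow>
   BRm d (\<lambda>q. Pm q b) (ZC k l) q + BRm d (\<lambda>q. Pm q b) (ZC k l) q =
   - (unitm l k ** (Zm q ** outer (Wv q b) (Vv q b)) - Zm q ** (unitm l k ** outer (Wv q b) (Vv q b))
      + (outer (Wv q b) (Vv q b) ** Zm q) ** unitm l k - outer (Wv q b) (Vv q b) ** (unitm l k ** Zm q))"
  by (simp add: vec_eq_iff BRm_Pm' unitm_right unitm_left unitm_mid2 outer_right outer_left outer_nth
      brUW_def brUV_def field_simps)

lemma BR_S_Z:
  "b \<le> d \<Longrightarrow> Sq (BRm d (\<lambda>q. Sm q b) (ZC k l) q) + Sq (BRm d (\<lambda>q. Sm q b) (ZC k l) q) =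
    Sq (Sm q b) * Sq (Zm q) * Sq (unitm l k) - Sq (unitm l k) * Sq (Zm q) * Sq (Sm q b)
       + Sq (Zm q) * Sq (unitm l k) * Sq (Sm q b) - Sq (Sm q b) * Sq (unitm l k) * Sq (Zm q)"
proof (induction b)
  case 0
  show ?case using arg_cong[OF BRm_Zm_Z[of d k l q], of Sq, unfolded Sq_simps]
    by (simp add: algebra_simps)
next
  case (Suc b)
  let ?n = "Sq (outer (Wv q (Suc b)) (Vv q (Suc b)))"
  let ?BP = "Sq (BRm d (\<lambda>q. Pm q (Suc b)) (ZC k l) q)"
  let ?BS = "Sq (BRm d (\<lambda>q. Sm q b) (ZC k l) q)"
  have bd: "Suc b \<in> {1..d}" using Suc.prems by simp
  have BP: "?BP + ?BP = - (Sq (unitm l k) * Sq (Zm q) * ?n - Sq (Zm q) * Sq (unitm l k) * ?n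
      + ?n * Sq (Zm q) * Sq (unitm l k) - ?n * Sq (unitm l k) * Sq (Zm q))"
    using arg_cong[OF BRm_Pm_Z[OF bd, of k l q], of Sq, unfolded Sq_simps] by (simp add: algebra_simps)
  have e: "Sq (BRm d (\<lambda>q. Sm q (Suc b)) (ZC k l) q) = ?BP * Sq (Sm q b) + Sq (Pm q (Suc b)) * ?BS"
    by (simp only: BRm_Sm_Suc Sq_simps)
  have "Sq (BRm d (\<lambda>q. Sm q (Suc b)) (ZC k l) q) + Sq (BRm d (\<lambda>q. Sm q (Suc b)) (ZC k l) q)
     = (?BP + ?BP) * Sq (Sm q b) + Sq (Pm q (Suc b)) * (?BS + ?BS)"
    unfolding e by (simp add: algebra_simps)
  also have "\<dots> = Sq (Sm q (Suc b)) * Sq (Zm q) * Sq (unitm l k) - Sq (unitm l k) * Sq (Zm q) * Sq (Sm q (Suc b))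
       + Sq (Zm q) * Sq (unitm l k) * Sq (Sm q (Suc b)) - Sq (Sm q (Suc b)) * Sq (unitm l k) * Sq (Zm q)"
    unfolding BP Suc.IH[OF Suc_leD[OF Suc.prems]]
    by (simp add: Sq_simps Sq_Pm algebra_simps)
  finally show ?case .
qed

lemma ring_trace_Z:
  fixes s z u :: "'n::finite sq"
  shows "tr (s^m * (s * z * u - u * z * s + z * u * s - s * u * z)) =
     (tr (s^(Suc m) * z * u) - tr (z * s^(Suc m) * u)) + (tr (s^(Suc m) * z * u) - tr (z * s^(Suc m) * u))"
proof -
  have h1: "tr (s^m * (s * z * u)) = tr (s^Suc m * z * u)"
    by (simp add: mult.assoc pow_left_comm)
  have h2: "tr (s^m * (u * z * s)) = tr (z * s^Suc m * u)"
    using tr_comm[of "s^m * u * z" s] tr_rot3[of "s^Suc m" u z]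
    by (simp add: mult.assoc power_commutes pow_left_comm)
  have h3: "tr (s^m * (z * u * s)) = tr (s^Suc m * z * u)"
    using tr_comm[of "s^m * z * u" s] by (simp add: mult.assoc power_commutes pow_left_comm)
  have h4: "tr (s^m * (s * u * z)) = tr (z * s^Suc m * u)"
    using tr_comm[of "s^Suc m * u" z] by (simp add: mult.assoc power_commutes pow_left_comm)
  have "tr (s^m * (s * z * u - u * z * s + z * u * s - s * u * z)) =
     tr (s^m * (s * z * u)) - tr (s^m * (u * z * s)) + tr (s^m * (z * u * s)) - tr (s^m * (s * u * z))"
    by (simp add: algebra_simps tr_add tr_diff tr_neg)
  then show ?thesis by (simp add: h1 h2 h3 h4)
qed

lemma hvf_Z:
  assumes "k \<ge> 1" "a \<le> d"
  shows "hvf d (Ham a k) (ZC i j) q = (mpow (Sm q a) k ** Zm q - Zm q ** mpow (Sm q a) k) $ i $ j"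
proof -
  obtain m where k: "k = Suc m" using assms by (cases k) auto
  have "hvf d (Ham a k) (ZC i j) q + hvf d (Ham a k) (ZC i j) q
     = (tr (Sq (Sm q a)^(Suc m) * Sq (Zm q) * Sq (unitm j i)) - tr (Sq (Zm q) * Sq (Sm q a)^(Suc m) * Sq (unitm j i)))
     + (tr (Sq (Sm q a)^(Suc m) * Sq (Zm q) * Sq (unitm j i)) - tr (Sq (Zm q) * Sq (Sm q a)^(Suc m) * Sq (unitm j i)))"
    unfolding hvf_via_tr[OF k] BR_S_Z[OF assms(2)] by (rule ring_trace_Z)
  also have "tr (Sq (Sm q a)^(Suc m) * Sq (Zm q) * Sq (unitm j i)) = (mpow (Sm q a) k ** Zm q) $ i $ j"
    by (simp only: k Sq_mpow[symmetric] Sq_mult[symmetric] tr_Sq trace_unitm)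
  also have "tr (Sq (Zm q) * Sq (Sm q a)^(Suc m) * Sq (unitm j i)) = (Zm q ** mpow (Sm q a) k) $ i $ j"
    by (simp only: k Sq_mpow[symmetric] Sq_mult[symmetric] tr_Sq trace_unitm)
  finally have e: "hvf d (Ham a k) (ZC i j) q + hvf d (Ham a k) (ZC i j) q = ((mpow (Sm q a) k ** Zm q) $ i $ j - (Zm q ** mpow (Sm q a) k) $ i $ j) + ((mpow (Sm q a) k ** Zm q) $ i $ j - (Zm q ** mpow (Sm q a) k) $ i $ j)" .
  show ?thesis using dbl[OF e] by simp
qed

definition evec :: "'n::finite \<Rightarrow> complex^'n" where "evec m = (\<chi> j. dlt m j)"

lemma dlt_sym: "dlt x y = dlt y x" by (auto simp: dlt_def)
lemma evec_nth: "evec m $ j = dlt m j" by (simp add: evec_def)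
lemma mv_evec: "(A *v evec m) $ i = A $ i $ m"
proof -
  have "(A *v evec m) $ i = (\<Sum>j\<in>UNIV. A $ i $ j * dlt j m)"
    by (simp add: matrix_vector_mult_def evec_def dlt_sym)
  also have "\<dots> = A $ i $ m" by (rule sum_dlt1)
  finally show ?thesis .
qed
lemma vm_evec: "(evec m v* A) $ j = A $ m $ j"
proof -
  have "(evec m v* A) $ j = (\<Sum>i\<in>UNIV. dlt m i * A $ i $ j)"
    by (simp add: vector_matrix_mult_def evec_def)
  also have "\<dots> = A $ m $ j" by (rule sum_dlt2)
  finally show ?thesis .
qed
lemma outer_mv: "(outer w v *v x) $ i = w $ i * sp v x"
  by (simp add: outer_def matrix_vector_mult_def sp_def sum_distrib_left mult_ac)
lemma vm_outer: "(x v* outer w v) $ j = sp x w * v $ j"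
  by (simp add: outer_def vector_matrix_mult_def sp_def sum_distrib_right sum_distrib_left mult_ac)
lemma sp_evec_r: "sp v (evec m) = v $ m"
proof -
  have "sp v (evec m) = (\<Sum>j\<in>UNIV. v $ j * dlt j m)" by (simp add: sp_def evec_def dlt_sym)
  also have "\<dots> = v $ m" by (rule sum_dlt1)
  finally show ?thesis .
qed
lemma sp_evec_l: "sp (evec m) v = v $ m"
proof -
  have "sp (evec m) v = (\<Sum>j\<in>UNIV. dlt m j * v $ j)" by (simp add: sp_def evec_def)
  also have "\<dots> = v $ m" by (rule sum_dlt2)
  finally show ?thesis .
qed

lemmas ent_simps = outer_right outer_left outer_nth outer_mv vm_outer sp_evec_r sp_evec_l evec_nth mv_evec vm_evec

lemma BRm_Zm_W: "BRm d (\<lambda>q. Zm q) (WC c m) q + BRm d (\<lambda>q. Zm q) (WC c m) q =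
   Zm q ** outer (Wv q c) (evec m) - outer (Wv q c) (evec m) ** Zm q"
  by (simp add: vec_eq_iff BRm_Zm ent_simps brUW_def field_simps)

lemma BRm_Pm_W_lt: "b \<in> {1..d} \<Longrightarrow> b < c \<Longrightarrow>
   BRm d (\<lambda>q. Pm q b) (WC c m) q + BRm d (\<lambda>q. Pm q b) (WC c m) q =
   outer (Wv q b) (Vv q b) ** outer (Wv q c) (evec m) - outer (Wv q c) (evec m) ** outer (Wv q b) (Vv q b)"
  by (simp add: vec_eq_iff BRm_Pm' ent_simps osgn_def dlt_def field_simps)

lemma BRm_Pm_W_gt: "b \<in> {1..d} \<Longrightarrow> c < b \<Longrightarrow>
   BRm d (\<lambda>q. Pm q b) (WC c m) q + BRm d (\<lambda>q. Pm q b) (WC c m) q =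
   outer (Wv q c) (evec m) ** outer (Wv q b) (Vv q b) - outer (Wv q b) (Vv q b) ** outer (Wv q c) (evec m)"
  by (simp add: vec_eq_iff BRm_Pm' ent_simps osgn_def dlt_def field_simps)

lemma BRm_Pm_W_eq: "b \<in> {1..d} \<Longrightarrow>
   BRm d (\<lambda>q. Pm q b) (WC b m) q + BRm d (\<lambda>q. Pm q b) (WC b m) q =
   outer (Wv q b) (evec m) + outer (Wv q b) (evec m)
   + outer (Wv q b) (evec m) ** outer (Wv q b) (Vv q b) + outer (Wv q b) (Vv q b) ** outer (Wv q b) (evec m)"
  by (simp add: vec_eq_iff BRm_Pm' ent_simps osgn_def dlt_def field_simps)

lemma BR_S_W:
  assumes c: "c \<in> {1..d}"
  shows "b \<le> d \<Longrightarrow> Sq (BRm d (\<lambda>q. Sm q b) (WC c m) q) + Sq (BRm d (\<lambda>q. Sm q b) (WC c m) q) =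
    (if b < c then Sq (Sm q b) * Sq (outer (Wv q c) (evec m)) - Sq (outer (Wv q c) (evec m)) * Sq (Sm q b)
     else Sq (outer (Wv q c) (evec m)) * Sq (Sm q b) + Sq (Sm q b) * Sq (outer (Wv q c) (evec m)))"
proof (induction b)
  case 0
  have "0 < c" using c by simp
  then show ?case using arg_cong[OF BRm_Zm_W[of d c m q], of Sq, unfolded Sq_simps]
    by simp
next
  case (Suc b)
  let ?n = "Sq (outer (Wv q (Suc b)) (Vv q (Suc b)))"
  let ?Q = "Sq (outer (Wv q c) (evec m))"
  let ?BP = "Sq (BRm d (\<lambda>q. Pm q (Suc b)) (WC c m) q)"
  let ?BS = "Sq (BRm d (\<lambda>q. Sm q b) (WC c m) q)"
  have bd: "Suc b \<in> {1..d}" using Suc.prems by simp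
  have IH: "?BS + ?BS = (if b < c then Sq (Sm q b) * ?Q - ?Q * Sq (Sm q b) else ?Q * Sq (Sm q b) + Sq (Sm q b) * ?Q)"
    using Suc.IH Suc.prems by simp
  have e: "Sq (BRm d (\<lambda>q. Sm q (Suc b)) (WC c m) q) = ?BP * Sq (Sm q b) + Sq (Pm q (Suc b)) * ?BS"
    by (simp only: BRm_Sm_Suc Sq_simps)
  have "Sq (BRm d (\<lambda>q. Sm q (Suc b)) (WC c m) q) + Sq (BRm d (\<lambda>q. Sm q (Suc b)) (WC c m) q)
     = (?BP + ?BP) * Sq (Sm q b) + Sq (Pm q (Suc b)) * (?BS + ?BS)"
    unfolding e by (simp add: algebra_simps)
  also have "\<dots> = (if Suc b < c then Sq (Sm q (Suc b)) * ?Q - ?Q * Sq (Sm q (Suc b))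
     else ?Q * Sq (Sm q (Suc b)) + Sq (Sm q (Suc b)) * ?Q)"
  proof (cases "Suc b < c")
    case True
    have BP: "?BP + ?BP = ?n * ?Q - ?Q * ?n"
      using arg_cong[OF BRm_Pm_W_lt[OF bd True, of m q], of Sq, unfolded Sq_simps] by simp
    show ?thesis using True unfolding BP IH by (simp add: Sq_simps Sq_Pm algebra_simps)
  next
    case False
    show ?thesis
    proof (cases "Suc b = c")
      case True
      have BP: "?BP + ?BP = ?Q + ?Q + ?Q * ?n + ?n * ?Q"
        using arg_cong[OF BRm_Pm_W_eq[OF bd, of m q], of Sq, unfolded Sq_simps] True by simp
      have "b < c" using True by simp
      then show ?thesis unfolding BP IH by (simp add: Sq_simps Sq_Pm algebra_simps True[symmetric])
    next
      case F2: False
      then have gt: "c < Suc b" "\<not> b < c" using False by auto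
      have BP: "?BP + ?BP = ?Q * ?n - ?n * ?Q"
        using arg_cong[OF BRm_Pm_W_gt[OF bd gt(1), of m q], of Sq, unfolded Sq_simps] by simp
      show ?thesis using False gt unfolding BP IH by (simp add: Sq_simps Sq_Pm algebra_simps)
    qed
  qed
  finally show ?case .
qed

lemma trace_outer_evec: "trace (M ** outer w (evec m)) = (M *v w) $ m"
proof -
  have "trace (M ** outer w (evec m)) = (\<Sum>i\<in>UNIV. dlt m i * (M *v w) $ i)"
    by (simp add: trace_def outer_right evec_nth mult.commute)
  also have "\<dots> = (M *v w) $ m" by (rule sum_dlt2)
  finally show ?thesis .
qed

lemma hvf_W:
  assumes "k \<ge> 1" "a \<le> d" "c \<in> {1..d}"
  shows "hvf d (Ham a k) (WC c m) q = (if c \<le> a then (mpow (Sm q a) k *v Wv q c) $ m else 0)"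
proof -
  obtain n where k: "k = Suc n" using assms by (cases k) auto
  let ?s = "Sq (Sm q a)" and ?Q = "Sq (outer (Wv q c) (evec m))"
  have t1: "tr (?s^n * (?Q * ?s)) = tr (?s^Suc n * ?Q)"
    using tr_comm[of "?s^n * ?Q" ?s] by (simp add: mult.assoc power_commutes pow_left_comm)
  have t2: "tr (?s^n * (?s * ?Q)) = tr (?s^Suc n * ?Q)"
    by (simp add: mult.assoc pow_left_comm)
  have t3: "tr (?s^Suc n * ?Q) = (mpow (Sm q a) k *v Wv q c) $ m"
    by (simp only: k Sq_mpow[symmetric] Sq_mult[symmetric] tr_Sq trace_outer_evec)
  have e: "hvf d (Ham a k) (WC c m) q + hvf d (Ham a k) (WC c m) q =
    tr (?s^n * (if a < c then ?s * ?Q - ?Q * ?s else ?Q * ?s + ?s * ?Q))"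
    unfolding hvf_via_tr[OF k] BR_S_W[OF assms(3) assms(2)] ..
  show ?thesis
  proof (cases "c \<le> a")
    case True
    then have na: "\<not> a < c" by simp
    have "hvf d (Ham a k) (WC c m) q + hvf d (Ham a k) (WC c m) q = tr (?s^n * (?Q * ?s + ?s * ?Q))"
      using e by (simp only: if_not_P[OF na])
    also have "\<dots> = tr (?s^n * (?Q * ?s)) + tr (?s^n * (?s * ?Q))" by (simp only: distrib_left tr_add)
    also have "\<dots> = (mpow (Sm q a) k *v Wv q c) $ m + (mpow (Sm q a) k *v Wv q c) $ m"
      by (simp only: t1 t2 t3)
    finally show ?thesis using True dbl by simp
  next
    case False
    then have "hvf d (Ham a k) (WC c m) q + hvf d (Ham a k) (WC c m) q = 0"
      using e by (simp add: right_diff_distrib tr_diff t1 t2)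
    then show ?thesis using False by simp
  qed
qed

lemma BRm_Zm_V: "BRm d (\<lambda>q. Zm q) (VC c m) q + BRm d (\<lambda>q. Zm q) (VC c m) q =
   outer (evec m) (Vv q c) ** Zm q - Zm q ** outer (evec m) (Vv q c)"
  by (simp add: vec_eq_iff BRm_Zm ent_simps brUV_def field_simps dlt_sym)

lemma BRm_Pm_V_lt: "b \<in> {1..d} \<Longrightarrow> b < c \<Longrightarrow>
   BRm d (\<lambda>q. Pm q b) (VC c m) q + BRm d (\<lambda>q. Pm q b) (VC c m) q =
   outer (evec m) (Vv q c) ** outer (Wv q b) (Vv q b) - outer (Wv q b) (Vv q b) ** outer (evec m) (Vv q c)"
  by (simp add: vec_eq_iff BRm_Pm' ent_simps osgn_def dlt_def field_simps)

lemma BRm_Pm_V_gt: "b \<in> {1..d} \<Longrightarrow> c < b \<Longrightarrow>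
   BRm d (\<lambda>q. Pm q b) (VC c m) q + BRm d (\<lambda>q. Pm q b) (VC c m) q =
   outer (Wv q b) (Vv q b) ** outer (evec m) (Vv q c) - outer (evec m) (Vv q c) ** outer (Wv q b) (Vv q b)"
  by (simp add: vec_eq_iff BRm_Pm' ent_simps osgn_def dlt_def field_simps)

lemma BRm_Pm_V_eq: "b \<in> {1..d} \<Longrightarrow>
   BRm d (\<lambda>q. Pm q b) (VC b m) q + BRm d (\<lambda>q. Pm q b) (VC b m) q =
   - (outer (evec m) (Vv q b) + outer (evec m) (Vv q b)
   + outer (Wv q b) (Vv q b) ** outer (evec m) (Vv q b) + outer (evec m) (Vv q b) ** outer (Wv q b) (Vv q b))"
  by (simp add: vec_eq_iff BRm_Pm' ent_simps osgn_def dlt_def field_simps)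

lemma BR_S_V:
  assumes c: "c \<in> {1..d}"
  shows "b \<le> d \<Longrightarrow> Sq (BRm d (\<lambda>q. Sm q b) (VC c m) q) + Sq (BRm d (\<lambda>q. Sm q b) (VC c m) q) =
    (if b < c then Sq (outer (evec m) (Vv q c)) * Sq (Sm q b) - Sq (Sm q b) * Sq (outer (evec m) (Vv q c))
     else - (Sq (outer (evec m) (Vv q c)) * Sq (Sm q b) + Sq (Sm q b) * Sq (outer (evec m) (Vv q c))))"
proof (induction b)
  case 0
  have "0 < c" using c by simp
  then show ?case using arg_cong[OF BRm_Zm_V[of d c m q], of Sq, unfolded Sq_simps]
    by simp
next
  case (Suc b)
  let ?n = "Sq (outer (Wv q (Suc b)) (Vv q (Suc b)))"
  let ?R = "Sq (outer (evec m) (Vv q c))"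
  let ?BP = "Sq (BRm d (\<lambda>q. Pm q (Suc b)) (VC c m) q)"
  let ?BS = "Sq (BRm d (\<lambda>q. Sm q b) (VC c m) q)"
  have bd: "Suc b \<in> {1..d}" using Suc.prems by simp
  have IH: "?BS + ?BS = (if b < c then ?R * Sq (Sm q b) - Sq (Sm q b) * ?R else - (?R * Sq (Sm q b) + Sq (Sm q b) * ?R))"
    using Suc.IH Suc.prems by simp
  have e: "Sq (BRm d (\<lambda>q. Sm q (Suc b)) (VC c m) q) = ?BP * Sq (Sm q b) + Sq (Pm q (Suc b)) * ?BS"
    by (simp only: BRm_Sm_Suc Sq_simps)
  have "Sq (BRm d (\<lambda>q. Sm q (Suc b)) (VC c m) q) + Sq (BRm d (\<lambda>q. Sm q (Suc b)) (VC c m) q)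
     = (?BP + ?BP) * Sq (Sm q b) + Sq (Pm q (Suc b)) * (?BS + ?BS)"
    unfolding e by (simp add: algebra_simps)
  also have "\<dots> = (if Suc b < c then ?R * Sq (Sm q (Suc b)) - Sq (Sm q (Suc b)) * ?R
     else - (?R * Sq (Sm q (Suc b)) + Sq (Sm q (Suc b)) * ?R))"
  proof (cases "Suc b < c")
    case True
    have BP: "?BP + ?BP = ?R * ?n - ?n * ?R"
      using arg_cong[OF BRm_Pm_V_lt[OF bd True, of m q], of Sq, unfolded Sq_simps] by simp
    show ?thesis using True unfolding BP IH by (simp add: Sq_simps Sq_Pm algebra_simps)
  next
    case False
    show ?thesis
    proof (cases "Suc b = c")
      case True
      have BP: "?BP + ?BP = - (?R + ?R + ?n * ?R + ?R * ?n)"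
        using arg_cong[OF BRm_Pm_V_eq[OF bd, of m q], of Sq, unfolded Sq_simps] True by simp
      have "b < c" using True by simp
      then show ?thesis unfolding BP IH by (simp add: Sq_simps Sq_Pm algebra_simps True[symmetric])
    next
      case F2: False
      then have gt: "c < Suc b" "\<not> b < c" using False by auto
      have BP: "?BP + ?BP = ?n * ?R - ?R * ?n"
        using arg_cong[OF BRm_Pm_V_gt[OF bd gt(1), of m q], of Sq, unfolded Sq_simps] by simp
      show ?thesis using False gt unfolding BP IH by (simp add: Sq_simps Sq_Pm algebra_simps)
    qed
  qed
  finally show ?case .
qed

lemma trace_evec_outer: "trace (M ** outer (evec m) v) = (v v* M) $ m"
proof -
  have "trace (M ** outer (evec m) v) = (\<Sum>i\<in>UNIV. v $ i * M $ i $ m)"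
    by (simp add: trace_def outer_right mv_evec mult.commute)
  also have "\<dots> = (v v* M) $ m" by (simp add: vector_matrix_mult_def)
  finally show ?thesis .
qed

lemma hvf_V:
  assumes "k \<ge> 1" "a \<le> d" "c \<in> {1..d}"
  shows "hvf d (Ham a k) (VC c m) q = (if c \<le> a then - (Vv q c v* mpow (Sm q a) k) $ m else 0)"
proof -
  obtain n where k: "k = Suc n" using assms by (cases k) auto
  let ?s = "Sq (Sm q a)" and ?R = "Sq (outer (evec m) (Vv q c))"
  have t1: "tr (?s^n * (?R * ?s)) = tr (?s^Suc n * ?R)"
    using tr_comm[of "?s^n * ?R" ?s] by (simp add: mult.assoc power_commutes pow_left_comm)
  have t2: "tr (?s^n * (?s * ?R)) = tr (?s^Suc n * ?R)"
    by (simp add: mult.assoc pow_left_comm)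
  have t3: "tr (?s^Suc n * ?R) = (Vv q c v* mpow (Sm q a) k) $ m"
    by (simp only: k Sq_mpow[symmetric] Sq_mult[symmetric] tr_Sq trace_evec_outer)
  have e: "hvf d (Ham a k) (VC c m) q + hvf d (Ham a k) (VC c m) q =
    tr (?s^n * (if a < c then ?R * ?s - ?s * ?R else - (?R * ?s + ?s * ?R)))"
    unfolding hvf_via_tr[OF k] BR_S_V[OF assms(3) assms(2)] ..
  show ?thesis
  proof (cases "c \<le> a")
    case True
    then have na: "\<not> a < c" by simp
    have "hvf d (Ham a k) (VC c m) q + hvf d (Ham a k) (VC c m) q = - (tr (?s^n * (?R * ?s)) + tr (?s^n * (?s * ?R)))"
      using e by (simp only: if_not_P[OF na] mult_minus_right distrib_left tr_add tr_neg)
    also have "\<dots> = - (Vv q c v* mpow (Sm q a) k) $ m + - (Vv q c v* mpow (Sm q a) k) $ m"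
      by (simp only: t1 t2 t3) simp
    finally have "hvf d (Ham a k) (VC c m) q = - (Vv q c v* mpow (Sm q a) k) $ m" by (rule dbl)
    then show ?thesis using True by simp
  next
    case False
    then have "hvf d (Ham a k) (VC c m) q + hvf d (Ham a k) (VC c m) q = 0"
      using e by (simp add: right_diff_distrib tr_diff t1 t2)
    then show ?thesis using False by simp
  qed
qed

lemma minv:
  fixes A :: "complex^'n::finite^'n"
  assumes "invertible A"
  shows "A ** matrix_inv A = mat 1" "matrix_inv A ** A = mat 1"
proof -
  have "\<exists>A'. A ** A' = mat 1 \<and> A' ** A = mat 1" using assms unfolding invertible_def by blast
  then have "A ** matrix_inv A = mat 1 \<and> matrix_inv A ** A = mat 1"
    unfolding matrix_inv_def by (rule someI_ex)
  then show "A ** matrix_inv A = mat 1" "matrix_inv A ** A = mat 1" by auto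
qed

lemma minv_unique:
  fixes A :: "complex^'n::finite^'n"
  assumes "A ** B = mat 1"
  shows "matrix_inv A = B" "invertible A"
proof -
  have BA: "B ** A = mat 1" using assms matrix_left_right_inverse by blast
  then show inv: "invertible A" unfolding invertible_def using assms by blast
  have "matrix_inv A = matrix_inv A ** (A ** B)" by (simp add: assms)
  also have "\<dots> = B" by (simp add: matrix_mul_assoc minv(2)[OF inv])
  finally show "matrix_inv A = B" .
qed

lemma vder_vm: "mder G G' t \<Longrightarrow> ((\<lambda>s. (v v* G s) $ j) has_field_derivative (v v* G') $ j) (at t)"
proof -
  assume a: "mder G G' t"
  have "((\<lambda>s. \<Sum>i\<in>UNIV. v $ i * G s $ i $ j) has_field_derivative (\<Sum>i\<in>UNIV. v $ i * G' $ i $ j)) (at t)"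
    using a unfolding mder_def by (intro DERIV_sum DERIV_cmult) auto
  then show ?thesis by (simp add: vector_matrix_mult_def)
qed

lemma vder_mv: "mder G G' t \<Longrightarrow> ((\<lambda>s. (G s *v w) $ i) has_field_derivative (G' *v w) $ i) (at t)"
proof -
  assume a: "mder G G' t"
  have "((\<lambda>s. \<Sum>j\<in>UNIV. G s $ i $ j * w $ j) has_field_derivative (\<Sum>j\<in>UNIV. G' $ i $ j * w $ j)) (at t)"
    using a unfolding mder_def by (intro DERIV_sum DERIV_cmult_right) auto
  then show ?thesis by (simp add: matrix_vector_mult_def)
qed

lemma Sq_eqI: "Sq A = Sq B \<Longrightarrow> A = B" by (simp add: Sq_inj)

lemma outer_conj: "outer (E *v w) (v v* F) = E ** outer w v ** F"
  by (simp add: vec_eq_iff mm_nth[of "E ** outer w v" F] outer_right outer_nth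
      vector_matrix_mult_def sum_distrib_left mult_ac)

lemma cf_X: "claimed_flow a k p s (XC i j) = (Xm p ** mexp (msc (-s) (mpow (Sm p a) k))) $ i $ j"
  by (simp add: claimed_flow_def Let_def)
lemma cf_Z: "claimed_flow a k p s (ZC i j) = (mexp (msc s (mpow (Sm p a) k)) ** Zm p ** mexp (msc (-s) (mpow (Sm p a) k))) $ i $ j"
  by (simp add: claimed_flow_def Let_def)
lemma cf_V: "claimed_flow a k p s (VC b j) = (if b \<le> a then (Vv p b v* mexp (msc (-s) (mpow (Sm p a) k))) $ j else p (VC b j))"
  by (simp add: claimed_flow_def Let_def)
lemma cf_W: "claimed_flow a k p s (WC b j) = (if b \<le> a then (mexp (msc s (mpow (Sm p a) k)) *v Wv p b) $ j else p (WC b j))"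
  by (simp add: claimed_flow_def Let_def)

lemma flow_zero: "claimed_flow a k p 0 = p"
proof
  fix c show "claimed_flow a k p 0 c = p c"
    by (cases c) (simp_all add: cf_X cf_Z cf_V cf_W mexp_zero Xm_def Zm_def Vv_def Wv_def)
qed

lemma S_rinv:
  assumes "invertible (Zm p)" "\<forall>c\<in>{1..d}. invertible (Pm p c)"
  shows "b \<le> d \<Longrightarrow> Sm p b ** (matrix_inv (Zm p) ** invprod p b) = mat 1"
proof (induction b)
  case 0 then show ?case using minv(1)[OF assms(1)] by simp
next
  case (Suc b)
  have inv: "invertible (Pm p (Suc b))" using assms(2) Suc.prems by auto
  have "Sm p (Suc b) ** (matrix_inv (Zm p) ** invprod p (Suc b))
     = Pm p (Suc b) ** (Sm p b ** (matrix_inv (Zm p) ** invprod p b)) ** matrix_inv (Pm p (Suc b))"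
    by (simp add: matrix_mul_assoc)
  also have "\<dots> = mat 1" using Suc minv(1)[OF inv] by simp
  finally show ?case .
qed

context
  fixes a k :: nat and p :: "'n::finite pt" and t :: complex
begin

definition "AA = mpow (Sm p a) k"
definition "EE = mexp (msc t AA)"
definition "FF = mexp (msc (-t) AA)"
definition "pp = claimed_flow a k p t"

lemma EF: "EE ** FF = mat 1" unfolding EE_def FF_def by (rule mexp_inv)
lemma FE: "FF ** EE = mat 1" unfolding EE_def FF_def using mexp_inv[of "-t" AA] by simp
lemma SA: "Sm p a ** AA = AA ** Sm p a" unfolding AA_def by (rule mpow_comm) simp
lemma SE: "Sm p a ** EE = EE ** Sm p a" unfolding EE_def by (rule mexp_comm[OF SA])
lemma AE: "AA ** EE = EE ** AA" unfolding EE_def by (rule mexp_comm) simp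
lemma AF: "AA ** FF = FF ** AA" unfolding FF_def by (rule mexp_comm) simp

lemma Xm_pp: "Xm pp = Xm p ** FF"
  by (simp add: vec_eq_iff Xm_def pp_def cf_X FF_def AA_def)
lemma Zm_pp: "Zm pp = EE ** Zm p ** FF"
  by (simp add: vec_eq_iff Zm_def pp_def cf_Z FF_def EE_def AA_def)
lemma Vv_pp: "Vv pp b = (if b \<le> a then Vv p b v* FF else Vv p b)"
  by (simp add: vec_eq_iff Vv_def pp_def cf_V FF_def AA_def)
lemma Wv_pp: "Wv pp b = (if b \<le> a then EE *v Wv p b else Wv p b)"
  by (simp add: vec_eq_iff Wv_def pp_def cf_W EE_def AA_def)

lemma fe_cancel: "Sq FF * (Sq EE * y) = y"
  by (simp add: mult.assoc[symmetric] Sq_mult[symmetric] FE Sq_one)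
lemma ef_cancel: "Sq EE * (Sq FF * y) = y"
  by (simp add: mult.assoc[symmetric] Sq_mult[symmetric] EF Sq_one)
lemma fe1: "Sq FF * Sq EE = 1" by (simp add: Sq_mult[symmetric] FE Sq_one)
lemma ef1: "Sq EE * Sq FF = 1" by (simp add: Sq_mult[symmetric] EF Sq_one)

lemma Pm_pp: "Pm pp b = (if b \<le> a then EE ** Pm p b ** FF else Pm p b)"
proof (cases "b \<le> a")
  case True
  have "Pm pp b = mat 1 + EE ** outer (Wv p b) (Vv p b) ** FF"
    using True by (simp add: Pm_outer Vv_pp Wv_pp outer_conj)
  also have "\<dots> = EE ** Pm p b ** FF"
    by (rule Sq_eqI) (simp add: Pm_outer Sq_simps algebra_simps ef1)
  finally show ?thesis using True by simp
qed (simp add: Pm_def Vv_pp Wv_pp)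

lemma Sm_pp: "b \<le> a \<Longrightarrow> Sm pp b = EE ** Sm p b ** FF"
proof (induction b)
  case 0 show ?case by (simp add: Zm_pp)
next
  case (Suc b)
  then have "Sm pp (Suc b) = (EE ** Pm p (Suc b) ** FF) ** (EE ** Sm p b ** FF)"
    by (simp add: Pm_pp)
  also have "\<dots> = EE ** Sm p (Suc b) ** FF"
    by (rule Sq_eqI) (simp add: Sq_simps mult.assoc fe_cancel)
  finally show ?case .
qed

lemma mpow_conj: "mpow (EE ** M ** FF) m = EE ** mpow M m ** FF"
proof (induction m)
  case 0 show ?case by (simp add: EF)
next
  case (Suc m)
  then show ?case by (simp, intro Sq_eqI) (simp add: Sq_simps mult.assoc fe_cancel)
qed

lemma AA_pp: "mpow (Sm pp a) k = AA"
proof -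
  have "mpow (Sm pp a) k = EE ** AA ** FF" by (simp add: Sm_pp mpow_conj AA_def)
  also have "\<dots> = AA"
  proof (rule Sq_eqI)
    have c: "Sq EE * Sq AA = Sq AA * Sq EE" using AE by (simp add: Sq_mult[symmetric])
    have "Sq (EE ** AA ** FF) = (Sq EE * Sq AA) * Sq FF" by (simp add: Sq_simps)
    also have "\<dots> = Sq AA * (Sq EE * Sq FF)" by (simp add: c mult.assoc)
    finally show "Sq (EE ** AA ** FF) = Sq AA" by (simp add: ef1)
  qed
  finally show ?thesis .
qed


lemma inv_E: "invertible EE" using minv_unique(2)[OF EF] .
lemma inv_F: "invertible FF" using minv_unique(2)[OF FE] .

lemma minv_conj:
  assumes "invertible M"
  shows "matrix_inv (EE ** M ** FF) = EE ** matrix_inv M ** FF"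
proof (rule minv_unique(1))
  show "EE ** M ** FF ** (EE ** matrix_inv M ** FF) = mat 1"
  proof (rule Sq_eqI)
    have "Sq M * Sq (matrix_inv M) = 1" using minv(1)[OF assms] by (simp add: Sq_mult[symmetric] Sq_one)
    then show "Sq (EE ** M ** FF ** (EE ** matrix_inv M ** FF)) = Sq (mat 1)"
      by (simp add: Sq_simps mult.assoc fe_cancel ef1 flip: mult.assoc[of "Sq M"])
  qed
qed

lemma invprod_pp_le:
  "b \<le> a \<Longrightarrow> (\<forall>c\<in>{1..b}. invertible (Pm p c)) \<Longrightarrow> invprod pp b = EE ** invprod p b ** FF"
proof (induction b)
  case 0 show ?case by (simp add: EF)
next
  case (Suc b)
  have IH: "invprod pp b = EE ** invprod p b ** FF" using Suc by auto
  have inv: "invertible (Pm p (Suc b))" using Suc.prems by auto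
  have "invprod pp (Suc b) = (EE ** invprod p b ** FF) ** (EE ** matrix_inv (Pm p (Suc b)) ** FF)"
    using Suc.prems by (simp add: IH Pm_pp minv_conj[OF inv])
  also have "\<dots> = EE ** invprod p (Suc b) ** FF"
    by (rule Sq_eqI) (simp add: Sq_simps mult.assoc fe_cancel)
  finally show ?case .
qed

lemma invprod_ge:
  assumes "WW ** invprod pp a = WW' ** invprod p a"
  shows "a \<le> b \<Longrightarrow> WW ** invprod pp b = WW' ** invprod p b"
proof (induction b)
  case 0 then show ?case using assms by simp
next
  case (Suc b)
  show ?case
  proof (cases "a \<le> b")
    case True
    then have "WW ** invprod pp (Suc b) = (WW ** invprod pp b) ** matrix_inv (Pm p (Suc b))"
      by (simp add: Pm_pp matrix_mul_assoc)
    also have "\<dots> = WW' ** invprod p (Suc b)"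
      using Suc.IH[OF True] by (simp add: matrix_mul_assoc)
    finally show ?thesis .
  next
    case False
    then have "a = Suc b" using Suc.prems by simp
    then show ?thesis using assms by simp
  qed
qed


lemma pp_Mx:
  assumes p: "p \<in> Mx d q" and ad: "a \<le> d"
  shows "pp \<in> Mx d q"
proof -
  have iX: "invertible (Xm p)" and iZ: "invertible (Zm p)" and iP: "\<forall>c\<in>{1..d}. invertible (Pm p c)"
    and eq: "Xm p ** Zm p ** matrix_inv (Xm p) ** matrix_inv (Zm p) ** invprod p d = mat q"
    using p unfolding Mx_def by auto
  have iX': "invertible (Xm pp)" unfolding Xm_pp by (intro invertible_mult iX inv_F)
  have iZ': "invertible (Zm pp)" unfolding Zm_pp by (intro invertible_mult iZ inv_F inv_E)
  have iP': "\<forall>c\<in>{1..d}. invertible (Pm pp c)"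
    using iP by (auto simp: Pm_pp intro!: invertible_mult inv_E inv_F)
  have mX: "matrix_inv (Xm pp) = EE ** matrix_inv (Xm p)"
  proof (rule minv_unique(1), rule Sq_eqI)
    have "Sq (Xm p) * Sq (matrix_inv (Xm p)) = 1" using minv(1)[OF iX] by (simp add: Sq_mult[symmetric] Sq_one)
    then show "Sq (Xm pp ** (EE ** matrix_inv (Xm p))) = Sq (mat 1)"
      by (simp add: Xm_pp Sq_simps mult.assoc fe_cancel)
  qed
  have mZ: "matrix_inv (Zm pp) = EE ** matrix_inv (Zm p) ** FF"
    unfolding Zm_pp by (rule minv_conj[OF iZ])
  define si where "si = matrix_inv (Zm p) ** invprod p a"
  have Ssi: "Sm p a ** si = mat 1" unfolding si_def using S_rinv[OF iZ iP ad] .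
  have siS: "si ** Sm p a = mat 1" using Ssi matrix_left_right_inverse by blast
  have esi: "Sq EE * Sq si = Sq si * Sq EE"
  proof -
    have se: "Sq (Sm p a) * Sq EE = Sq EE * Sq (Sm p a)" using SE by (simp add: Sq_mult[symmetric])
    have a1: "Sq (Sm p a) * Sq si = 1" using Ssi by (simp add: Sq_mult[symmetric] Sq_one)
    have a2: "Sq si * Sq (Sm p a) = 1" using siS by (simp add: Sq_mult[symmetric] Sq_one)
    have "Sq si * Sq EE = Sq si * Sq EE * (Sq (Sm p a) * Sq si)" by (simp add: a1)
    also have "\<dots> = Sq si * (Sq (Sm p a) * Sq EE) * Sq si" by (simp add: se mult.assoc)
    also have "\<dots> = (Sq si * Sq (Sm p a)) * Sq EE * Sq si" by (simp add: mult.assoc)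
    also have "\<dots> = Sq EE * Sq si" by (simp add: a2)
    finally show ?thesis by simp
  qed
  let ?W = "Xm pp ** Zm pp ** matrix_inv (Xm pp) ** matrix_inv (Zm pp)"
  let ?W' = "Xm p ** Zm p ** matrix_inv (Xm p) ** matrix_inv (Zm p)"
  have ipa: "invprod pp a = EE ** invprod p a ** FF"
    using invprod_pp_le[of a] iP ad by auto
  have base: "?W ** invprod pp a = ?W' ** invprod p a"
  proof (rule Sq_eqI)
    have zi: "Sq (matrix_inv (Zm p)) * (Sq (invprod p a) * y) = Sq si * y" for y
      by (simp add: si_def Sq_simps mult.assoc)
    have "Sq (?W ** invprod pp a) = Sq (Xm p) * (Sq (Zm p) * (Sq (matrix_inv (Xm p)) * (Sq EE * (Sq si * Sq FF))))"
      by (simp only: mX mZ) (simp add: ipa Xm_pp Zm_pp Sq_simps mult.assoc fe_cancel zi)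
    also have "\<dots> = Sq (Xm p) * (Sq (Zm p) * (Sq (matrix_inv (Xm p)) * (Sq si)))"
      by (simp add: mult.assoc[symmetric] esi) (simp add: mult.assoc ef1)
    also have "\<dots> = Sq (?W' ** invprod p a)"
      by (simp add: Sq_simps mult.assoc zi[of 1, simplified])
    finally show "Sq (?W ** invprod pp a) = Sq (?W' ** invprod p a)" .
  qed
  have "?W ** invprod pp d = ?W' ** invprod p d" by (rule invprod_ge[OF base ad])
  then have "?W ** invprod pp d = mat q" using eq by simp
  then show ?thesis unfolding Mx_def using iX' iZ' iP' by simp
qed


lemma flow_Mx: "p \<in> Mx d q \<Longrightarrow> a \<le> d \<Longrightarrow> claimed_flow a k p t \<in> Mx d q"
  using pp_Mx unfolding pp_def by blast

lemma flow_deriv: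
  assumes k: "k \<ge> 1" and ad: "a \<le> d" and c: "c \<in> coords d"
  shows "((\<lambda>s. claimed_flow a k p s c) has_field_derivative hvf d (Ham a k) c (claimed_flow a k p t)) (at t)"
proof -
  have AFs: "Sq AA * Sq FF = Sq FF * Sq AA" using AF by (simp add: Sq_mult[symmetric])
  have AEs: "Sq AA * Sq EE = Sq EE * Sq AA" using AE by (simp add: Sq_mult[symmetric])
  have dE: "mder (\<lambda>s. mexp (msc s AA)) (AA ** EE) t" unfolding EE_def by (rule mder_exp)
  have dF: "mder (\<lambda>s. mexp (msc (-s) AA)) (- (AA ** FF)) t" unfolding FF_def by (rule mder_exp_neg)
  from c consider (X) i j where "c = XC i j" | (Z) i j where "c = ZC i j"
    | (V) b j where "c = VC b j" "b \<in> {1..d}" | (W) b j where "c = WC b j" "b \<in> {1..d}"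
    unfolding coords_def by blast
  then show ?thesis
  proof cases
    case (X i j)
    have d: "mder (\<lambda>s. Xm p ** mexp (msc (-s) AA)) (0 ** mexp (msc (-t) AA) + Xm p ** (- (AA ** FF))) t"
      by (rule mder_mult[OF mder_const dF])
    have m: "0 ** mexp (msc (-t) AA) + Xm p ** (- (AA ** FF)) = - (Xm pp ** mpow (Sm pp a) k)"
      by (rule Sq_eqI) (simp add: AA_pp Xm_pp Sq_simps mult.assoc AFs)
    show ?thesis using d[unfolded m] unfolding mder_def X
      by (simp add: cf_X AA_def[symmetric] hvf_X[OF k ad] pp_def[symmetric])
  next
    case (Z i j)
    have d: "mder (\<lambda>s. mexp (msc s AA) ** Zm p ** mexp (msc (-s) AA))
        (((AA ** EE) ** Zm p + mexp (msc t AA) ** 0) ** mexp (msc (-t) AA) + (mexp (msc t AA) ** Zm p) ** (- (AA ** FF))) t"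
      by (rule mder_mult[OF mder_mult[OF dE mder_const] dF])
    have m: "((AA ** EE) ** Zm p + mexp (msc t AA) ** 0) ** mexp (msc (-t) AA) + (mexp (msc t AA) ** Zm p) ** (- (AA ** FF))
        = mpow (Sm pp a) k ** Zm pp - Zm pp ** mpow (Sm pp a) k"
      by (rule Sq_eqI) (simp add: AA_pp Zm_pp EE_def[symmetric] FF_def[symmetric] Sq_simps mult.assoc AFs)
    show ?thesis using d[unfolded m] unfolding mder_def Z
      by (simp add: cf_Z AA_def[symmetric] hvf_Z[OF k ad] pp_def[symmetric])
  next
    case (V b j)
    show ?thesis
    proof (cases "b \<le> a")
      case True
      have d: "((\<lambda>s. (Vv p b v* mexp (msc (-s) AA)) $ j) has_field_derivative (Vv p b v* (- (AA ** FF))) $ j) (at t)"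
        by (rule vder_vm[OF dF])
      have m: "(Vv p b v* (- (AA ** FF))) $ j = - (Vv pp b v* mpow (Sm pp a) k) $ j"
      proof -
        have "Vv p b v* (- (AA ** FF)) = - (Vv pp b v* mpow (Sm pp a) k)"
        proof -
          have neg: "v v* (- M) = - (v v* M)" for v :: "complex^'n" and M :: "complex^'n^'n"
            by (simp add: vec_eq_iff vector_matrix_mult_def sum_negf)
          show ?thesis using True by (simp add: AA_pp Vv_pp vector_matrix_mul_assoc AF neg)
        qed
        then show ?thesis by simp
      qed
      show ?thesis using d[unfolded m] True unfolding V
        by (simp add: cf_V AA_def[symmetric] hvf_V[OF k ad V(2)] pp_def[symmetric])
    next
      case False
      then show ?thesis unfolding V
        by (simp add: cf_V hvf_V[OF k ad V(2)])
    qed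
  next
    case (W b j)
    show ?thesis
    proof (cases "b \<le> a")
      case True
      have d: "((\<lambda>s. (mexp (msc s AA) *v Wv p b) $ j) has_field_derivative ((AA ** EE) *v Wv p b) $ j) (at t)"
        by (rule vder_mv[OF dE])
      have m: "((AA ** EE) *v Wv p b) $ j = (mpow (Sm pp a) k *v Wv pp b) $ j"
        using True by (simp add: AA_pp Wv_pp matrix_vector_mul_assoc)
      show ?thesis using d[unfolded m] True unfolding W
        by (simp add: cf_W AA_def[symmetric] hvf_W[OF k ad W(2)] pp_def[symmetric])
    next
      case False
      then show ?thesis unfolding W
        by (simp add: cf_W hvf_W[OF k ad W(2)])
    qed
  qed
qed

end



theorem mainTheorem16:
  fixes d k a :: nat and q :: complex and p :: "'n::finite pt"
  assumes "d \<ge> 1"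
    and "q \<noteq> 0" and "\<forall>m::nat. m \<ge> 1 \<longrightarrow> q ^ m \<noteq> 1"
    and "a \<in> {1..d}" and "k \<ge> 1"
    and "p \<in> Mx d q"
  shows "claimed_flow a k p 0 = p \<and>
    (\<forall>t::complex. claimed_flow a k p t \<in> Mx d q \<and>
       (\<forall>c\<in>coords d. ((\<lambda>s. claimed_flow a k p s c) has_field_derivative
            hvf d (Ham a k) c (claimed_flow a k p t)) (at t)))"
  using flow_zero flow_Mx[OF assms(6)] flow_deriv[OF assms(5)] assms(4) by auto

end
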